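(* For each $1\leq p < \infty$, $B^{p}$ contains an isometric and complemented copy of $\ell^{p}(\mathfrak c,L^{p}[0,1])$.
   Context: Let $\mathcal{B}$ be the Borel $\sigma$-algebra of $\mathbb{R}$, $\lambda$ the Lebesgue measure, and $\mathcal{B}_{\infty}$ the $\sigma$-algebra on $\mathbb{R}^{\mathbb{N}}$ generated by the cylinder sets $\prod_{i=1}^{m}C_{i}\times\prod_{i=m+1}^{\infty}\mathbb{R}$ with $C_i\in\mathcal{B}$, $m\in\mathbb{N}$. Let $\mathcal{F}(\mathcal{B},\lambda)$ be the set of finite rectangles $\prod_{i\in\mathbb{N}}C_{i}$ with $C_i\in\mathcal{B}$ and $\prod_{i}\lambda(C_i)\in[0,\infty)$, with $\mathrm{vol}(\prod_{i}C_i):=\prod_i\lambda(C_i)$. The measure $\mu$ is the restriction to $\mathcal{B}_{\infty}$ of the outer measure $\mu^{\ast}(A):=\inf\{\sum_{n}\mathrm{vol}(\mathscr{C}_{n}) : \mathscr{C}_{n}\in\mathcal{F}(\mathcal{B},\lambda),\ A\subset\bigcup_{n}\mathscr{C}_{n}\}$ ($\inf\varnothing=\infty$). Let $I:=\mathbb{Z}^{\mathbb{N}}$ and, for $\mathfrak{a}=(a_n)\in I$, $\mathcal{C}_{\mathfrak{a}}:=\prod_{n\in\mathbb{N}}[a_{n},a_{n}+1)$. Define $B^{p}:=\{f\in L^{p}(\mu) : \int_{\mathcal{C}_{\mathfrak{a}}}|f|^{p}\,d\mu=0 \text{ for each } \mathfrak{a}\in I\}$, a closed subspace of $L^p(\mu)$.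 $\ell^{p}(\kappa,X)$ denotes the $\ell^p$-sum of $\kappa$ copies of the Banach space $X$, and $\mathfrak{c}$ is the cardinality of the continuum. *)

theory Defs
  imports "HOL-Analysis.Analysis"
begin

definition cylinders :: "(nat \<Rightarrow> real) set set" where
  "cylinders = {Pi UNIV C | C m. (\<forall>i<m. C i \<in> sets borel) \<and> (\<forall>i\<ge>m. C i = UNIV)}"

definition B_inf :: "(nat \<Rightarrow> real) set set" where
  "B_inf = sigma_sets UNIV cylinders"

definition finite_rect :: "(nat \<Rightarrow> real set) \<Rightarrow> bool" where
  "finite_rect C \<longleftrightarrow> (\<forall>i. C i \<in> sets borel) \<and>
     (\<exists>v. v < \<infinity> \<and> ((\<lambda>n. \<Prod>i<n. emeasure lborel (C i)) \<longlongrightarrow> v) sequentially)"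

definition vol :: "(nat \<Rightarrow> real set) \<Rightarrow> ennreal" where
  "vol C = lim (\<lambda>n. \<Prod>i<n. emeasure lborel (C i))"

definition mu_star :: "(nat \<Rightarrow> real) set \<Rightarrow> ennreal" where
  "mu_star A = (INF R \<in> {R :: nat \<Rightarrow> nat \<Rightarrow> real set.
        (\<forall>n. finite_rect (R n)) \<and> A \<subseteq> (\<Union>n. Pi UNIV (R n))}. (\<Sum>n. vol (R n)))"

definition mu :: "(nat \<Rightarrow> real) measure" where
  "mu = measure_of UNIV B_inf mu_star"

definition memLp :: "'a measure \<Rightarrow> real \<Rightarrow> ('a \<Rightarrow> real) \<Rightarrow> bool" where
  "memLp M p f \<longleftrightarrow> f \<in> borel_measurable M \<and> (\<integral>\<^sup>+ x. ennreal (\<bar>f x\<bar> powr p) \<partial>M) < \<infinity>"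

definition Lp_norm :: "'a measure \<Rightarrow> real \<Rightarrow> ('a \<Rightarrow> real) \<Rightarrow> real" where
  "Lp_norm M p f = (enn2real (\<integral>\<^sup>+ x. ennreal (\<bar>f x\<bar> powr p) \<partial>M)) powr (1 / p)"

definition cube :: "(nat \<Rightarrow> int) \<Rightarrow> (nat \<Rightarrow> real) set" where
  "cube a = Pi UNIV (\<lambda>n. {real_of_int (a n) ..< real_of_int (a n) + 1})"

definition Bp :: "real \<Rightarrow> ((nat \<Rightarrow> real) \<Rightarrow> real) set" where
  "Bp p = {f. memLp mu p f \<and>
     (\<forall>a :: nat \<Rightarrow> int. (\<integral>\<^sup>+ x \<in> cube a. ennreal (\<bar>f x\<bar> powr p) \<partial>mu) = 0)}"

section \<open>\<ell>^p(\<cc>, L^p[0,1]), indexed by the reals (a set of cardinality continuum)\<close>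

definition L01 :: "real measure" where
  "L01 = restrict_space lborel {0..1}"

definition ellp :: "real \<Rightarrow> (real \<Rightarrow> real \<Rightarrow> real) set" where
  "ellp p = {g. (\<forall>k. memLp L01 p (g k)) \<and>
     (\<integral>\<^sup>+ k. ennreal (Lp_norm L01 p (g k) powr p) \<partial>count_space UNIV) < \<infinity>}"

definition ellp_norm :: "real \<Rightarrow> (real \<Rightarrow> real \<Rightarrow> real) \<Rightarrow> real" where
  "ellp_norm p g =
     (enn2real (\<integral>\<^sup>+ k. ennreal (Lp_norm L01 p (g k) powr p) \<partial>count_space UNIV)) powr (1 / p)"

end

theory Submission
  imports Defs "HOL-Probability.Probability"
begin

definition pp :: "(nat \<Rightarrow> real set) \<Rightarrow> nat \<Rightarrow> ennreal" where
  "pp R n = (\<Prod>i<n. emeasure lborel (R i))"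

lemma finite_rectD:
  assumes "finite_rect R"
  shows "pp R \<longlonglongrightarrow> vol R" "vol R < \<infinity>" "\<And>i. R i \<in> sets borel"
proof -
  obtain v where v: "v < \<infinity>" "pp R \<longlonglongrightarrow> v"
    using assms unfolding finite_rect_def pp_def by auto
  have "vol R = v" unfolding vol_def using v(2) limI unfolding pp_def by blast
  then show "pp R \<longlonglongrightarrow> vol R" "vol R < \<infinity>" using v by auto
  show "\<And>i. R i \<in> sets borel" using assms unfolding finite_rect_def by auto
qed

lemma finite_rectI:
  assumes "\<And>i. R i \<in> sets borel" "pp R \<longlonglongrightarrow> v" "v < \<infinity>"
  shows "finite_rect R" "vol R = v"
proof -
  show "finite_rect R" using assms unfolding finite_rect_def pp_def by auto
  show "vol R = v" unfolding vol_def using assms(2) limI unfolding pp_def by blast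
qed

lemma pp_eventually_zero:
  assumes "emeasure lborel (R j) = 0"
  shows "\<forall>n>j. pp R n = 0"
  using assms by (auto simp: pp_def intro!: prod_zero)

lemma empty_rect: "finite_rect (\<lambda>i. {})" "vol (\<lambda>i. {}) = 0"
proof -
  have "\<forall>\<^sub>F n in sequentially. pp (\<lambda>i. {}) n = 0"
    using pp_eventually_zero[of "\<lambda>i. {}" 0] unfolding eventually_sequentially
    by (metis emeasure_empty less_le_trans zero_less_one)
  then have "pp (\<lambda>i. {}) \<longlonglongrightarrow> 0"
    by (simp add: tendsto_eventually)
  then show "finite_rect (\<lambda>i. {})" "vol (\<lambda>i. {}) = 0"
    using finite_rectI[of "\<lambda>i. {}"] by auto
qed

lemma pp_upd:
  assumes "j < n"
  shows "pp (R(j := X)) n = emeasure lborel X * (\<Prod>i\<in>{..<n}-{j}. emeasure lborel (R i))"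
proof -
  have "pp (R(j := X)) n = emeasure lborel ((R(j := X)) j) * (\<Prod>i\<in>{..<n}-{j}. emeasure lborel ((R(j := X)) i))"
    unfolding pp_def using assms by (subst prod.remove[of _ j]) auto
  also have "(\<Prod>i\<in>{..<n}-{j}. emeasure lborel ((R(j := X)) i)) = (\<Prod>i\<in>{..<n}-{j}. emeasure lborel (R i))"
    by (rule prod.cong) auto
  moreover have "emeasure lborel ((R(j := X)) j) = emeasure lborel X" by simp
  ultimately show ?thesis by (simp only:)
qed

lemma ennreal_top_mult_lt: "(\<top>::ennreal) * x < \<top> \<Longrightarrow> x = 0"
  by (metis ennreal_mult_eq_top_iff less_irrefl)

lemma ennreal_inv_cancel: "(a::ennreal) \<noteq> 0 \<Longrightarrow> a < top \<Longrightarrow> inverse a * (a * q) = q"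
  by (metis comm_monoid_mult_class.mult_1 divide_ennreal_def
    ennreal_divide_self mult.commute mult.left_commute)

lemma ennreal_aux_lt: "(x::ennreal) \<le> a \<Longrightarrow> a < top \<Longrightarrow> v < top \<Longrightarrow> a \<noteq> 0 \<Longrightarrow> x * (v / a) < top"
  by (metis ennreal_divide_eq_top_iff ennreal_top_eq_mult_iff less_top top_le)

lemma split_rect_gen:
  assumes R: "finite_rect R" and X: "X \<in> sets borel" and XR: "X \<subseteq> R j"
  shows "finite_rect (R(j := X))"
    "emeasure lborel (R j) \<noteq> 0 \<Longrightarrow> emeasure lborel (R j) < \<infinity> \<Longrightarrow>
       vol (R(j := X)) = emeasure lborel X * (vol R / emeasure lborel (R j))"
    "emeasure lborel (R j) = 0 \<or> emeasure lborel (R j) = \<infinity> \<Longrightarrow> vol (R(j := X)) = 0 \<and> vol R = 0"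
proof -
  define a where "a = emeasure lborel (R j)"
  define q where "q n = (\<Prod>i\<in>{..<n}-{j}. emeasure lborel (R i))" for n
  have ev: "\<forall>\<^sub>F n in sequentially. pp (R(j := Y)) n = emeasure lborel Y * q n" for Y
    unfolding eventually_sequentially q_def by (rule exI[of _ "Suc j"]) (auto intro!: pp_upd)
  have evR: "\<forall>\<^sub>F n in sequentially. pp R n = a * q n"
    using ev[of "R j"] by (simp add: a_def)
  have Rlim: "(\<lambda>n. a * q n) \<longlonglongrightarrow> vol R"
    by (rule Lim_transform_eventually[OF finite_rectD(1)[OF R] evR])
  have sides: "\<And>i. (R(j:=X)) i \<in> sets borel" using finite_rectD(3)[OF R] X by auto
  have Xa: "emeasure lborel X \<le> a" unfolding a_def using XR by (intro emeasure_mono) (use finite_rectD(3)[OF R] in auto)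
  have zero_case: "vol (R(j := X)) = 0 \<and> vol R = 0 \<and> finite_rect (R(j := X))"
    if za: "a = 0 \<or> a = \<infinity>"
  proof -
    have "\<forall>\<^sub>F n in sequentially. a * q n = 0"
    proof (cases "a = 0")
      case True then show ?thesis by simp
    next
      case False
      with za have ainf: "a = \<top>" by simp
      have "\<forall>\<^sub>F n in sequentially. a * q n < \<top>"
        using order_tendstoD(2)[OF Rlim finite_rectD(2)[OF R]] by simp
      moreover have "q n = 0 \<Longrightarrow> q m = 0" if "n \<le> m" for n m
      proof -
        assume "q n = 0"
        then obtain i where "i \<in> {..<n}-{j}" "emeasure lborel (R i) = 0"
          unfolding q_def by auto
        then show "q m = 0" unfolding q_def using that by (intro prod_zero) auto
      qed
      ultimately show ?thesis using ainf
        by (auto elim!: eventually_mono dest: ennreal_top_mult_lt)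
    qed
    then have q0: "\<forall>\<^sub>F n in sequentially. emeasure lborel Y * q n = 0" if "emeasure lborel Y \<le> a" for Y
    proof -
      have h: "a * q n = 0 \<Longrightarrow> emeasure lborel Y * q n = 0" for n
        using that by (metis mult_eq_0_iff le_zero_eq)
      show ?thesis by (rule eventually_mono[OF \<open>\<forall>\<^sub>F n in sequentially. a * q n = 0\<close> h])
    qed
    have "pp (R(j:=X)) \<longlonglongrightarrow> 0"
      using eventually_conj[OF ev[of X] q0[OF Xa]]
      by (intro tendsto_eventually) (auto elim!: eventually_mono)
    then have 1: "finite_rect (R(j:=X))" "vol (R(j:=X)) = 0"
      using finite_rectI[of "R(j:=X)" 0, OF sides] by auto
    have "pp R \<longlonglongrightarrow> 0"
      using eventually_conj[OF evR q0[of "R j"]]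
      by (intro tendsto_eventually) (auto elim!: eventually_mono simp: a_def)
    then have "vol R = 0" using finite_rectI[of R 0, OF finite_rectD(3)[OF R]] by auto
    with 1 show ?thesis by auto
  qed
  have pos_case: "pp (R(j:=X)) \<longlonglongrightarrow> emeasure lborel X * (vol R / a)"
    if "a \<noteq> 0" "a < \<infinity>"
  proof -
    have "(\<lambda>n. inverse a * (a * q n)) \<longlonglongrightarrow> inverse a * vol R"
      using Rlim that by (intro ennreal_tendsto_cmult) (auto simp: less_le)
    moreover have "inverse a * (a * q n) = q n" for n
      using that by (intro ennreal_inv_cancel) auto
    moreover have "inverse a * vol R = vol R / a" by (simp add: divide_ennreal_def mult.commute)
    ultimately have "q \<longlonglongrightarrow> vol R / a" by simp
    then have "(\<lambda>n. emeasure lborel X * q n) \<longlonglongrightarrow> emeasure lborel X * (vol R / a)"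
      using Xa that finite_rectD(2)[OF R] by (intro tendsto_mult_ennreal) (auto simp: top_unique ennreal_divide_eq_top_iff)
    moreover have "\<forall>\<^sub>F n in sequentially. emeasure lborel X * q n = pp (R(j := X)) n"
      using ev[of X] by (simp add: eq_commute)
    ultimately show ?thesis by (rule Lim_transform_eventually)
  qed
  show "finite_rect (R(j := X))"
  proof (cases "a = 0 \<or> a = \<infinity>")
    case True then show ?thesis using zero_case by auto
  next
    case False
    then have "a \<noteq> 0" "a < \<infinity>" by (auto simp: top.not_eq_extremum)
    have "emeasure lborel X * (vol R / a) < \<infinity>"
      using Xa \<open>a < \<infinity>\<close> finite_rectD(2)[OF R] \<open>a \<noteq> 0\<close>
      using ennreal_aux_lt[of "emeasure lborel X" a "vol R"] by simp
    then show ?thesis using finite_rectI(1)[of "R(j:=X)", OF sides pos_case[OF \<open>a \<noteq> 0\<close> \<open>a < \<infinity>\<close>]] by auto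
  qed
  show "emeasure lborel (R j) \<noteq> 0 \<Longrightarrow> emeasure lborel (R j) < \<infinity> \<Longrightarrow>
       vol (R(j := X)) = emeasure lborel X * (vol R / emeasure lborel (R j))"
  proof -
    assume "emeasure lborel (R j) \<noteq> 0" "emeasure lborel (R j) < \<infinity>"
    then have "a \<noteq> 0" "a < \<infinity>" by (auto simp: a_def)
    have "emeasure lborel X * (vol R / a) < \<infinity>"
      using Xa \<open>a < \<infinity>\<close> finite_rectD(2)[OF R] \<open>a \<noteq> 0\<close>
      using ennreal_aux_lt[of "emeasure lborel X" a "vol R"] by simp
    then show ?thesis using finite_rectI(2)[of "R(j:=X)", OF sides pos_case[OF \<open>a \<noteq> 0\<close> \<open>a < \<infinity>\<close>]] by (auto simp: a_def)
  qed
  show "emeasure lborel (R j) = 0 \<or> emeasure lborel (R j) = \<infinity> \<Longrightarrow> vol (R(j := X)) = 0 \<and> vol R = 0"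
    using zero_case by (auto simp: a_def)
qed

lemma split_vol:
  assumes R: "finite_rect R" and B: "B \<in> sets borel"
  shows "finite_rect (R(j := R j \<inter> B))" "finite_rect (R(j := R j - B))"
    "vol (R(j := R j \<inter> B)) + vol (R(j := R j - B)) = vol R"
proof -
  have Rj: "R j \<in> sets borel" using finite_rectD(3)[OF R] by auto
  show "finite_rect (R(j := R j \<inter> B))" "finite_rect (R(j := R j - B))"
    using split_rect_gen(1)[OF R] Rj B by auto
  show "vol (R(j := R j \<inter> B)) + vol (R(j := R j - B)) = vol R"
  proof (cases "emeasure lborel (R j) = 0 \<or> emeasure lborel (R j) = \<infinity>")
    case True
    then show ?thesis using split_rect_gen(3)[OF R, of "R j \<inter> B"] split_rect_gen(3)[OF R, of "R j - B"] Rj B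
      by auto
  next
    case False
    then have a: "emeasure lborel (R j) \<noteq> 0" "emeasure lborel (R j) < \<infinity>" by (auto simp: top.not_eq_extremum)
    have sum: "emeasure lborel (R j \<inter> B) + emeasure lborel (R j - B) = emeasure lborel (R j)"
      using Rj B by (subst plus_emeasure) (auto intro!: arg_cong[where f="emeasure lborel"])
    have "vol (R(j := R j \<inter> B)) + vol (R(j := R j - B)) =
        (emeasure lborel (R j \<inter> B) + emeasure lborel (R j - B)) * (vol R / emeasure lborel (R j))"
      using split_rect_gen(2)[OF R, of "R j \<inter> B"] split_rect_gen(2)[OF R, of "R j - B"] Rj B a
      by (simp add: distrib_right)
    also have "\<dots> = vol R" unfolding sum using a
      by (metis ennreal_divide_self ennreal_divide_times infinity_ennreal_def mult_1)
    finally show ?thesis .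
  qed
qed

definition covers :: "(nat \<Rightarrow> real) set \<Rightarrow> (nat \<Rightarrow> nat \<Rightarrow> real set) set" where
  "covers A = {R. (\<forall>n. finite_rect (R n)) \<and> A \<subseteq> (\<Union>n. Pi UNIV (R n))}"

lemma mu_star_covers: "mu_star A = (INF R \<in> covers A. \<Sum>n. vol (R n))"
  unfolding mu_star_def covers_def by simp

lemma mu_star_le_cover: "R \<in> covers A \<Longrightarrow> mu_star A \<le> (\<Sum>n. vol (R n))"
  unfolding mu_star_covers by (rule INF_lower)

lemma mu_star_rect:
  assumes "finite_rect R" "A \<subseteq> Pi UNIV R"
  shows "mu_star A \<le> vol R"
proof -
  define R' where "R' n = (if n = 0 then R else (\<lambda>i. {}))" for n :: nat
  have "A \<subseteq> (\<Union>n. Pi UNIV (R' n))"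
  proof
    fix x assume "x \<in> A"
    then have "x \<in> Pi UNIV (R' 0)" using assms by (auto simp: R'_def)
    then show "x \<in> (\<Union>n. Pi UNIV (R' n))" by blast
  qed
  then have "R' \<in> covers A" using assms empty_rect unfolding covers_def R'_def
    by auto
  then have "mu_star A \<le> (\<Sum>n. vol (R' n))" by (rule mu_star_le_cover)
  also have "(\<Sum>n. vol (R' n)) = (\<Sum>n\<in>{0}. vol (R' n))"
    by (rule suminf_finite) (auto simp: R'_def empty_rect)
  finally show ?thesis by (simp add: R'_def)
qed

lemma mu_star_empty: "mu_star {} = 0"
  using mu_star_rect[OF empty_rect(1), of "{}"] empty_rect(2) by auto

lemma mu_star_mono: "A \<subseteq> B \<Longrightarrow> mu_star A \<le> mu_star B"
  unfolding mu_star_covers by (rule INF_superset_mono) (auto simp: covers_def)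

lemma mu_star_close: "mu_star A < e \<Longrightarrow> \<exists>R \<in> covers A. (\<Sum>n. vol (R n)) < e"
  unfolding mu_star_covers INF_less_iff by auto

lemma mu_star_countably_subadditive:
  fixes A :: "nat \<Rightarrow> (nat \<Rightarrow> real) set"
  shows "mu_star (\<Union>i. A i) \<le> (\<Sum>n. mu_star (A n))"
proof (rule ennreal_le_epsilon)
  fix e :: real assume "0 < e" "(\<Sum>n. mu_star (A n)) < top"
  then have *: "\<And>n. mu_star (A n) < mu_star (A n) + e * (1/2)^Suc n"
    by (auto simp add: less_top dest!: ennreal_suminf_lessD)
  have "\<forall>n. \<exists>R \<in> covers (A n). (\<Sum>i. vol (R i)) < mu_star (A n) + e * (1/2)^Suc n"
    using mu_star_close[OF *] by blast
  then obtain B where B: "\<And>n. B n \<in> covers (A n)"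
      and Ble: "\<And>n. (\<Sum>i. vol (B n i)) \<le> mu_star (A n) + e * (1/2)^(Suc n)"
    by (metis less_imp_le)
  define C where "C = case_prod B o prod_decode"
  have "C \<in> covers (\<Union>i. A i)"
    unfolding covers_def
  proof (intro CollectI conjI allI subsetI)
    fix k show "finite_rect (C k)" using B unfolding C_def covers_def by (auto split: prod.splits)
  next
    fix x assume "x \<in> (\<Union>i. A i)"
    then obtain n where "x \<in> A n" by auto
    then obtain i where "x \<in> Pi UNIV (B n i)" using B[of n] unfolding covers_def by blast
    moreover have "C (prod_encode (n, i)) = B n i" unfolding C_def by simp
    ultimately show "x \<in> (\<Union>k. Pi UNIV (C k))" by (metis UN_I UNIV_I)
  qed
  then have "mu_star (\<Union>i. A i) \<le> (\<Sum>i. vol (C i))" by (rule mu_star_le_cover)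
  also have "\<dots> = (\<Sum>n. \<Sum>i. vol (B n i))"
    unfolding C_def comp_def by (intro suminf_ennreal_2dimen) auto
  also have "\<dots> \<le> (\<Sum>n. mu_star (A n) + e * (1/2) ^ Suc n)"
    by (intro suminf_le allI Ble) auto
  also have "... = (\<Sum>n. mu_star (A n)) + (\<Sum>n. ennreal e * ennreal ((1/2) ^ Suc n))"
    using \<open>0 < e\<close> by (subst suminf_add[symmetric])
                     (auto simp del: ennreal_suminf_cmult simp add: ennreal_mult[symmetric])
  also have "\<dots> = (\<Sum>n. mu_star (A n)) + e"
    unfolding ennreal_suminf_cmult
    by (subst suminf_ennreal_eq[OF zero_le_power power_half_series]) auto
  finally show "mu_star (\<Union>i. A i) \<le> (\<Sum>n. mu_star (A n)) + e" .
qed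

lemma mu_star_subadd: "mu_star (X \<union> Y) \<le> mu_star X + mu_star Y"
proof -
  define A where "A n = (if n = 0 then X else if n = 1 then Y else {})" for n :: nat
  have "X \<union> Y = (\<Union>i. A i)" unfolding A_def by (auto split: if_splits)
  then have "mu_star (X \<union> Y) \<le> (\<Sum>n. mu_star (A n))"
    using mu_star_countably_subadditive by simp
  also have "(\<Sum>n. mu_star (A n)) = (\<Sum>n\<in>{0,1}. mu_star (A n))"
    by (rule suminf_finite) (auto simp: A_def mu_star_empty)
  finally show ?thesis by (simp add: A_def)
qed

lemma outer_mu_star: "outer_measure_space (Pow UNIV) mu_star"
  unfolding outer_measure_space_def positive_def increasing_def countably_subadditive_def
  using mu_star_empty mu_star_mono mu_star_countably_subadditive by auto

definition LS where "LS = lambda_system UNIV (Pow UNIV) mu_star"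

lemma LS_measure_space: "measure_space UNIV LS mu_star"
  unfolding LS_def by (rule sigma_algebra.caratheodory_lemma[OF sigma_algebra_Pow outer_mu_star])

lemma coord_in_LS:
  assumes B: "B \<in> sets borel"
  shows "{x. x j \<in> B} \<in> LS"
proof -
  have "mu_star ({x. x j \<in> B} \<inter> X) + mu_star ((UNIV - {x. x j \<in> B}) \<inter> X) = mu_star X" for X
  proof (rule antisym)
    show "mu_star X \<le> mu_star ({x. x j \<in> B} \<inter> X) + mu_star ((UNIV - {x. x j \<in> B}) \<inter> X)"
    proof -
      have "({x. x j \<in> B} \<inter> X) \<union> ((UNIV - {x. x j \<in> B}) \<inter> X) = X" by auto
      then show ?thesis using mu_star_subadd[of "{x. x j \<in> B} \<inter> X" "(UNIV - {x. x j \<in> B}) \<inter> X"]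
        by simp
    qed
    show "mu_star ({x. x j \<in> B} \<inter> X) + mu_star ((UNIV - {x. x j \<in> B}) \<inter> X) \<le> mu_star X"
      unfolding mu_star_covers[of X]
    proof (rule INF_greatest)
      fix R assume R: "R \<in> covers X"
      define R1 where "R1 n = (R n)(j := R n j \<inter> B)" for n
      define R2 where "R2 n = (R n)(j := R n j - B)" for n
      have fr: "\<And>n. finite_rect (R n)" using R unfolding covers_def by auto
      have "{x. x j \<in> B} \<inter> X \<subseteq> (\<Union>n. Pi UNIV (R1 n))"
      proof
        fix x assume x: "x \<in> {x. x j \<in> B} \<inter> X"
        then obtain n where "x \<in> Pi UNIV (R n)" using R unfolding covers_def by blast
        then have "x \<in> Pi UNIV (R1 n)" using x unfolding R1_def by (auto simp: Pi_iff)
        then show "x \<in> (\<Union>n. Pi UNIV (R1 n))" by blast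
      qed
      then have "R1 \<in> covers ({x. x j \<in> B} \<inter> X)"
        using split_vol(1)[OF fr B] unfolding covers_def R1_def by auto
      then have 1: "mu_star ({x. x j \<in> B} \<inter> X) \<le> (\<Sum>n. vol (R1 n))" by (rule mu_star_le_cover)
      have "(UNIV - {x. x j \<in> B}) \<inter> X \<subseteq> (\<Union>n. Pi UNIV (R2 n))"
      proof
        fix x assume x: "x \<in> (UNIV - {x. x j \<in> B}) \<inter> X"
        then obtain n where "x \<in> Pi UNIV (R n)" using R unfolding covers_def by blast
        then have "x \<in> Pi UNIV (R2 n)" using x unfolding R2_def by (auto simp: Pi_iff)
        then show "x \<in> (\<Union>n. Pi UNIV (R2 n))" by blast
      qed
      then have "R2 \<in> covers ((UNIV - {x. x j \<in> B}) \<inter> X)"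
        using split_vol(2)[OF fr B] unfolding covers_def R2_def by auto
      then have 2: "mu_star ((UNIV - {x. x j \<in> B}) \<inter> X) \<le> (\<Sum>n. vol (R2 n))" by (rule mu_star_le_cover)
      have "(\<Sum>n. vol (R1 n)) + (\<Sum>n. vol (R2 n)) = (\<Sum>n. vol (R1 n) + vol (R2 n))"
        by (rule suminf_add) (auto intro: summableI)
      also have "\<dots> = (\<Sum>n. vol (R n))"
        using split_vol(3)[OF fr B] unfolding R1_def R2_def by simp
      finally show "mu_star ({x. x j \<in> B} \<inter> X) + mu_star ((UNIV - {x. x j \<in> B}) \<inter> X) \<le> (\<Sum>n. vol (R n))"
        using add_mono[OF 1 2] by simp
    qed
  qed
  then show ?thesis unfolding LS_def lambda_system_def by auto
qed

lemma LS_algebra: "algebra UNIV LS"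
  using LS_measure_space unfolding measure_space_def sigma_algebra_def by auto

lemma cyl_in_LS:
  "(\<forall>i<m. C i \<in> sets borel) \<and> (\<forall>i\<ge>m. C i = UNIV) \<Longrightarrow> Pi UNIV C \<in> LS"
proof (induction m arbitrary: C)
  case 0
  interpret A: algebra UNIV LS by (rule LS_algebra)
  from 0 have "Pi UNIV C = UNIV" by auto
  then show ?case using A.top by simp
next
  case (Suc m)
  interpret A: algebra UNIV LS by (rule LS_algebra)
  have "Pi UNIV C = Pi UNIV (C(m := UNIV)) \<inter> {x. x m \<in> C m}"
    by (auto simp: Pi_iff split: if_splits)
  moreover have "Pi UNIV (C(m := UNIV)) \<in> LS"
    using Suc.prems by (intro Suc.IH) auto
  moreover have "{x. x m \<in> C m} \<in> LS" using Suc.prems by (intro coord_in_LS) auto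
  ultimately show ?case using A.Int by simp
qed

lemma B_inf_sub_LS: "B_inf \<subseteq> LS"
proof -
  have "sigma_algebra UNIV LS" using LS_measure_space unfolding measure_space_def by auto
  moreover have "cylinders \<subseteq> LS" unfolding cylinders_def using cyl_in_LS by auto
  ultimately show ?thesis unfolding B_inf_def by (rule sigma_algebra.sigma_sets_subset)
qed

lemma sigma_algebra_B_inf: "sigma_algebra UNIV B_inf"
  unfolding B_inf_def by (rule sigma_algebra_sigma_sets) auto

lemma measure_space_B_inf: "measure_space UNIV B_inf mu_star"
  by (rule measure_down[OF LS_measure_space sigma_algebra_B_inf B_inf_sub_LS])

lemma sets_mu: "sets mu = B_inf"
  unfolding mu_def using sigma_algebra.sigma_sets_eq[OF sigma_algebra_B_inf]
  by (simp add: sets_measure_of)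

lemma space_mu: "space mu = UNIV"
  unfolding mu_def by simp

lemma emeasure_mu: "A \<in> B_inf \<Longrightarrow> emeasure mu A = mu_star A"
  unfolding mu_def using measure_space_B_inf
  by (intro emeasure_measure_of_sigma) (auto simp: measure_space_def)

lemma coord_in_B_inf: "B \<in> sets borel \<Longrightarrow> {x. x j \<in> B} \<in> B_inf"
proof -
  assume B: "B \<in> sets borel"
  have "{x. x j \<in> B} = Pi UNIV (\<lambda>i. if i = j then B else UNIV)"
  proof (intro set_eqI iffI)
    fix x assume "x \<in> {x. x j \<in> B}" then show "x \<in> Pi UNIV (\<lambda>i. if i = j then B else UNIV)" by (auto simp: Pi_iff)
  next
    fix x assume "x \<in> Pi UNIV (\<lambda>i. if i = j then B else UNIV)"
    then have "x j \<in> (if j = j then B else UNIV)" by (rule Pi_mem) simp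
    then show "x \<in> {x. x j \<in> B}" by simp
  qed
  also have "\<dots> \<in> cylinders" unfolding cylinders_def using B
    by (intro CollectI exI[of _ "\<lambda>i. if i = j then B else UNIV"] exI[of _ "Suc j"]) auto
  finally show ?thesis unfolding B_inf_def by (rule sigma_sets.Basic)
qed

lemma rect_in_B_inf:
  assumes "\<And>i. R i \<in> sets borel"
  shows "Pi UNIV R \<in> B_inf"
proof -
  have "Pi UNIV R = (\<Inter>i. {x. x i \<in> R i})" by (auto simp: Pi_iff)
  also have "\<dots> \<in> B_inf"
    unfolding B_inf_def
    by (rule sigma_sets_Inter) (use assms coord_in_B_inf[unfolded B_inf_def] in auto)
  finally show ?thesis .
qed

lemma coord_measurable[measurable]: "(\<lambda>x. x j) \<in> borel_measurable mu"
proof (rule measurableI)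
  fix A :: "real set" assume "A \<in> sets borel"
  moreover have "(\<lambda>x. x j) -` A \<inter> space mu = {x. x j \<in> A}" by (auto simp: space_mu)
  ultimately show "(\<lambda>x. x j) -` A \<inter> space mu \<in> sets mu" by (simp add: sets_mu coord_in_B_inf)
qed auto

lemma mu_rect_le:
  assumes "finite_rect R" "A \<in> sets mu" "A \<subseteq> Pi UNIV R"
  shows "emeasure mu A \<le> vol R"
  using assms emeasure_mu mu_star_rect sets_mu by auto

lemma mu_star_lower:
  assumes S: "\<And>i. S i \<in> sets borel" "\<And>i. emeasure lborel (S i) = 1"
  shows "1 \<le> mu_star (Pi UNIV S)"
  unfolding mu_star_covers
proof (rule INF_greatest)
  fix R assume R: "R \<in> covers (Pi UNIV S)"
  define M where "M i = uniform_measure lborel (S i)" for i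
  have ps: "prob_space (M i)" for i unfolding M_def using S
    by (intro prob_space_uniform_measure) auto
  interpret Mi: prob_space "M i" for i by (rule ps)
  interpret P: product_prob_space M UNIV by unfold_locales
  have spM[simp]: "space (M i) = UNIV" for i unfolding M_def by simp
  have setsM[simp]: "sets (M i) = sets borel" for i unfolding M_def by simp
  have emM: "emeasure (M i) X = emeasure lborel (S i \<inter> X)" if "X \<in> sets borel" for i X
    unfolding M_def using that S by (simp add: emeasure_uniform_measure divide_ennreal_def)
  have spP: "space (PiM UNIV M) = UNIV" by (simp add: space_PiM)
  have PiE_eq: "PiE UNIV X = Pi UNIV X" for X :: "nat \<Rightarrow> real set" by (simp add: PiE_def)
  have Pi_sets: "Pi UNIV X \<in> sets (PiM UNIV M)" if "\<And>i. X i \<in> sets borel" for X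
    using sets_PiM_I_countable[of UNIV X M] that by (simp add: PiE_eq)
  have bound: "emeasure (PiM UNIV M) (Pi UNIV X) \<le> (\<Prod>i<n. emeasure lborel (S i \<inter> X i))"
    if X: "\<And>i. X i \<in> sets borel" for X n
  proof -
    have "Pi UNIV X \<subseteq> P.emb UNIV {..<n} (PiE {..<n} X)"
      by (auto simp: prod_emb_def PiE_iff Pi_iff)
    then have "emeasure (PiM UNIV M) (Pi UNIV X) \<le> emeasure (PiM UNIV M) (P.emb UNIV {..<n} (PiE {..<n} X))"
      by (intro emeasure_mono) (auto intro!: sets_PiM_I_finite measurable_prod_emb simp: X)
    also have "\<dots> = (\<Prod>i<n. emeasure (M i) (X i))"
      by (rule P.emeasure_PiM_emb) (auto simp: X)
    finally show ?thesis using emM X by simp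
  qed
  have one: "emeasure (PiM UNIV M) (Pi UNIV S) = 1"
  proof -
    have "AE x in PiM UNIV M. x i \<in> S i" for i
    proof -
      have "{x \<in> space (PiM UNIV M). x i \<notin> S i} = Pi UNIV ((\<lambda>_. UNIV)(i := - S i))"
        by (auto simp: spP Pi_iff split: if_splits)
      moreover have "emeasure (PiM UNIV M) (Pi UNIV ((\<lambda>_. UNIV)(i := - S i))) = 0"
      proof -
        have "emeasure (PiM UNIV M) (Pi UNIV ((\<lambda>_. UNIV)(i := - S i))) \<le>
            (\<Prod>k<Suc i. emeasure lborel (S k \<inter> ((\<lambda>_. UNIV)(i := - S i)) k))"
          by (rule bound) (use S in auto)
        also have "\<dots> = 0" by (intro prod_zero bexI[of _ i]) auto
        finally show ?thesis by simp
      qed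
      moreover have "Pi UNIV ((\<lambda>_. UNIV)(i := - S i)) \<in> sets (PiM UNIV M)"
        by (rule Pi_sets) (use S in auto)
      ultimately show ?thesis
        by (intro AE_I'[of "Pi UNIV ((\<lambda>_. UNIV)(i := - S i))"]) (auto intro: null_setsI)
    qed
    then have "AE x in PiM UNIV M. x \<in> Pi UNIV S" by (simp add: AE_all_countable Pi_iff)
    then have "emeasure (PiM UNIV M) (Pi UNIV S) = emeasure (PiM UNIV M) (space (PiM UNIV M))"
      by (intro emeasure_eq_AE) (auto intro: Pi_sets S)
    then show ?thesis by (simp add: P.emeasure_space_1)
  qed
  have fr: "\<And>n. finite_rect (R n)" and cov: "Pi UNIV S \<subseteq> (\<Union>n. Pi UNIV (R n))"
    using R unfolding covers_def by auto
  have Rs: "\<And>n i. R n i \<in> sets borel" using finite_rectD(3)[OF fr] by auto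
  have le_vol: "emeasure (PiM UNIV M) (Pi UNIV (R n)) \<le> vol (R n)" for n
  proof (rule LIMSEQ_le_const[OF finite_rectD(1)[OF fr[of n]]])
    show "\<exists>N. \<forall>k\<ge>N. emeasure (PiM UNIV M) (Pi UNIV (R n)) \<le> pp (R n) k"
    proof (intro exI allI impI)
      fix k
      have "emeasure (PiM UNIV M) (Pi UNIV (R n)) \<le> (\<Prod>i<k. emeasure lborel (S i \<inter> R n i))"
        by (rule bound) (simp add: Rs)
      also have "\<dots> \<le> pp (R n) k" unfolding pp_def
        by (rule prod_mono_ennreal) (auto intro!: emeasure_mono simp: Rs)
      finally show "emeasure (PiM UNIV M) (Pi UNIV (R n)) \<le> pp (R n) k" .
    qed
  qed
  have "1 = emeasure (PiM UNIV M) (Pi UNIV S)" using one by simp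
  also have "\<dots> \<le> emeasure (PiM UNIV M) (\<Union>n. Pi UNIV (R n))"
    using cov by (intro emeasure_mono) (auto intro!: Pi_sets simp: Rs)
  also have "\<dots> \<le> (\<Sum>n. emeasure (PiM UNIV M) (Pi UNIV (R n)))"
    by (intro emeasure_subadditive_countably) (auto intro!: Pi_sets simp: Rs)
  also have "\<dots> \<le> (\<Sum>n. vol (R n))"
    by (intro suminf_le le_vol) auto
  finally show "1 \<le> (\<Sum>n. vol (R n))" .
qed

definition code :: "real \<Rightarrow> nat \<Rightarrow> bool" where
  "code r n = (real_of_rat (from_nat n) < r)"

lemma code_inj: "r \<noteq> s \<Longrightarrow> \<exists>n. code r n \<noteq> code s n"
proof -
  assume "r \<noteq> s"
  then consider "r < s" | "s < r" by linarith
  then show ?thesis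
  proof cases
    case 1
    then obtain q :: rat where "r < of_rat q" "of_rat q < s" using of_rat_dense by blast
    then have "code r (to_nat q) \<noteq> code s (to_nat q)" unfolding code_def by auto
    then show ?thesis by blast
  next
    case 2
    then obtain q :: rat where "s < of_rat q" "of_rat q < r" using of_rat_dense by blast
    then have "code r (to_nat q) \<noteq> code s (to_nat q)" unfolding code_def by auto
    then show ?thesis by blast
  qed
qed

definition side :: "real \<Rightarrow> nat \<Rightarrow> real set" where
  "side r i = (if odd i then {1/2..<3/2} else if code r (i div 2) then {1..<2} else {0..<1})"

definition Ecell :: "real \<Rightarrow> (nat \<Rightarrow> real) set" where
  "Ecell r = Pi UNIV (side r)"

lemma side_borel[measurable]: "side r i \<in> sets borel"
  unfolding side_def by auto

lemma side_measure: "emeasure lborel (side r i) = 1"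
  unfolding side_def by auto

lemma side_1: "side r 1 = {1/2..<3/2}"
  unfolding side_def by simp

lemma side_Suc0: "side r (Suc 0) = {1/2..<3/2}"
  unfolding side_def by simp

lemma Ecell_sets[measurable]: "Ecell r \<in> sets mu"
  unfolding Ecell_def sets_mu by (rule rect_in_B_inf) simp

lemma Ecell_disj: "r \<noteq> s \<Longrightarrow> Ecell r \<inter> Ecell s = {}"
proof -
  assume "r \<noteq> s"
  then obtain n where n: "code r n \<noteq> code s n" using code_inj by blast
  have "side r (2*n) \<inter> side s (2*n) = {}" using n unfolding side_def by auto
  then show ?thesis unfolding Ecell_def by (auto simp: Pi_iff)
qed

lemma Ecell_x1: "x \<in> Ecell r \<Longrightarrow> x 1 - 1/2 \<in> {0..<1}"
proof -
  assume "x \<in> Ecell r"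
  then have "x 1 \<in> side r 1" unfolding Ecell_def by (rule Pi_mem) simp
  then show ?thesis unfolding side_1 by auto
qed

lemma pp_const1: "(\<And>i. emeasure lborel (R i) = 1) \<Longrightarrow> pp R n = 1"
  unfolding pp_def by simp

lemma side_rect: "finite_rect (side r)" "vol (side r) = 1"
proof -
  have "pp (side r) = (\<lambda>n. 1)" by (rule ext) (simp add: pp_const1 side_measure)
  then have "pp (side r) \<longlonglongrightarrow> 1" by simp
  then show "finite_rect (side r)" "vol (side r) = 1" using finite_rectI[of "side r" 1] by auto
qed

lemma emeasure_Ecell: "emeasure mu (Ecell r) = 1"
proof (rule antisym)
  show "emeasure mu (Ecell r) \<le> 1"
    using mu_rect_le[OF side_rect(1) Ecell_sets, of r r] side_rect(2)[of r] by (simp add: Ecell_def)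
  show "1 \<le> emeasure mu (Ecell r)"
    using mu_star_lower[of "side r"] side_measure emeasure_mu[of "Ecell r"] Ecell_sets sets_mu
    by (simp add: Ecell_def)
qed

lemma ennreal_sq_eq:
  fixes a b c d :: ennreal
  assumes "a \<le> c" "b \<le> d" "a + b = c + d" "c + d < \<infinity>"
  shows "a = c"
proof -
  have "c < \<infinity>" "d < \<infinity>" using assms(4) by (auto simp: top_unique)
  then have "a < \<infinity>" "b < \<infinity>" using assms(1,2) by (auto intro: le_less_trans)
  then show ?thesis using assms \<open>c < \<infinity>\<close> \<open>d < \<infinity>\<close>
    by (cases a; cases b; cases c; cases d) (auto simp flip: ennreal_plus)
qed

lemma emeasure_Ecell_coord:
  assumes B: "B \<in> sets borel"
  shows "emeasure mu (Ecell r \<inter> {x. x 1 \<in> B}) = emeasure lborel ({1/2..<3/2} \<inter> B)"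
proof -
  let ?R = "side r"
  have sp: "finite_rect (?R(1 := ?R 1 \<inter> B))" "finite_rect (?R(1 := ?R 1 - B))"
    "vol (?R(1 := ?R 1 \<inter> B)) + vol (?R(1 := ?R 1 - B)) = 1"
    using split_vol[OF side_rect(1)[of r] B, where j="1"] side_rect(2)[of r] by auto
  have v1: "vol (?R(1 := ?R 1 \<inter> B)) = emeasure lborel ({1/2..<3/2} \<inter> B)"
    using split_rect_gen(2)[OF side_rect(1)[of r], where X="?R 1 \<inter> B" and j=1] B side_measure[of r 1] side_rect(2)[of r]
    by (simp add: side_1 side_Suc0)
  have s1: "Ecell r \<inter> {x. x 1 \<in> B} \<in> sets mu" "Ecell r - {x. x 1 \<in> B} \<in> sets mu"
  proof -
    have "{x. x 1 \<in> B} \<in> sets mu" using B by (simp add: sets_mu coord_in_B_inf)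
    then show "Ecell r \<inter> {x. x 1 \<in> B} \<in> sets mu" "Ecell r - {x. x 1 \<in> B} \<in> sets mu"
      using Ecell_sets by auto
  qed
  have a: "emeasure mu (Ecell r \<inter> {x. x 1 \<in> B}) \<le> vol (?R(1 := ?R 1 \<inter> B))"
    by (rule mu_rect_le[OF sp(1) s1(1)]) (auto simp: Ecell_def Pi_iff)
  have b: "emeasure mu (Ecell r - {x. x 1 \<in> B}) \<le> vol (?R(1 := ?R 1 - B))"
  proof (rule mu_rect_le[OF sp(2) s1(2)])
    show "Ecell r - {x. x 1 \<in> B} \<subseteq> Pi UNIV (?R(1 := ?R 1 - B))"
    proof
      fix x assume x: "x \<in> Ecell r - {x. x 1 \<in> B}"
      then have "x i \<in> ?R i" for i unfolding Ecell_def by (auto simp: Pi_iff)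
      then show "x \<in> Pi UNIV (?R(1 := ?R 1 - B))" using x by (auto simp: Pi_iff)
    qed
  qed
  have "emeasure mu (Ecell r \<inter> {x. x 1 \<in> B}) + emeasure mu (Ecell r - {x. x 1 \<in> B}) = emeasure mu (Ecell r)"
    using s1 by (subst plus_emeasure) (auto intro!: arg_cong[where f="emeasure mu"])
  then have "emeasure mu (Ecell r \<inter> {x. x 1 \<in> B}) = vol (?R(1 := ?R 1 \<inter> B))"
    using ennreal_sq_eq[OF a b] sp(3) emeasure_Ecell by simp
  then show ?thesis using v1 by simp
qed

lemma half_interval_meas:
  fixes a :: int
  shows "emeasure lborel ({real_of_int a..<real_of_int a + 1} \<inter> {1/2..<3/2}) \<le> ennreal (1/2)"
proof (cases "a \<le> 0")
  case True
  then have "{real_of_int a..<real_of_int a + 1} \<inter> {1/2..<3/2} \<subseteq> {1/2..<1}" by auto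
  then have "emeasure lborel ({real_of_int a..<real_of_int a + 1} \<inter> {1/2..<3/2}) \<le> emeasure lborel {1/2..<1::real}"
    by (intro emeasure_mono) auto
  then show ?thesis by simp
next
  case False
  then have "{real_of_int a..<real_of_int a + 1} \<inter> {1/2..<3/2} \<subseteq> {1..<3/2}" by auto
  then have "emeasure lborel ({real_of_int a..<real_of_int a + 1} \<inter> {1/2..<3/2}) \<le> emeasure lborel {1..<3/2::real}"
    by (intro emeasure_mono) auto
  then show ?thesis by simp
qed

lemma cube_Ecell_null: "emeasure mu (cube a \<inter> Ecell r) = 0"
proof -
  define Q where "Q i = {real_of_int (a i)..<real_of_int (a i) + 1} \<inter> side r i" for i
  have Qb: "Q i \<in> sets borel" for i unfolding Q_def by auto
  have Q1: "emeasure lborel (Q i) \<le> 1" for i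
    using emeasure_mono[of "Q i" "side r i" lborel] side_measure[of r i] unfolding Q_def by auto
  have Qodd: "odd i \<Longrightarrow> emeasure lborel (Q i) \<le> ennreal (1/2)" for i
    unfolding Q_def side_def using half_interval_meas by simp
  have bnd: "pp Q n \<le> ennreal ((1/2) ^ (n div 2))" for n
  proof (induction n)
    case 0 then show ?case by (simp add: pp_def)
  next
    case (Suc n)
    have "pp Q (Suc n) = pp Q n * emeasure lborel (Q n)" by (simp add: pp_def)
    show ?case
    proof (cases "even n")
      case True
      then have "Suc n div 2 = n div 2" by presburger
      have "pp Q n * emeasure lborel (Q n) \<le> ennreal ((1/2) ^ (n div 2)) * 1"
        by (intro mult_mono Suc.IH Q1) auto
      then show ?thesis using \<open>pp Q (Suc n) = _\<close> \<open>Suc n div 2 = n div 2\<close> by simp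
    next
      case False
      then have "Suc n div 2 = Suc (n div 2)" by presburger
      have "pp Q n * emeasure lborel (Q n) \<le> ennreal ((1/2) ^ (n div 2)) * ennreal (1/2)"
        by (intro mult_mono Suc.IH Qodd False) auto
      also have "\<dots> = ennreal ((1/2) ^ (n div 2) * (1/2))"
        by (subst ennreal_mult[symmetric]) auto
      also have "\<dots> = ennreal ((1/2) ^ (Suc n div 2))"
        using \<open>Suc n div 2 = Suc (n div 2)\<close> by (simp add: mult.commute)
      finally show ?thesis using \<open>pp Q (Suc n) = _\<close> by simp
    qed
  qed
  have lim0: "(\<lambda>n. (1/2::real) ^ (n div 2)) \<longlonglongrightarrow> 0"
  proof -
    have f: "filterlim (\<lambda>n::nat. n div 2) at_top sequentially"
    proof (subst filterlim_at_top, intro allI)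
      fix Z :: nat
      show "eventually (\<lambda>n. Z \<le> n div 2) sequentially"
        unfolding eventually_sequentially by (rule exI[of _ "2*Z"]) auto
    qed
    have "(\<lambda>m. (1/2::real) ^ m) \<longlonglongrightarrow> 0" by (rule LIMSEQ_power_zero) simp
    from filterlim_compose[OF this f] show ?thesis by (simp add: comp_def)
  qed
  then have "(\<lambda>n. ennreal ((1/2) ^ (n div 2))) \<longlonglongrightarrow> ennreal 0"
    by (intro tendsto_ennrealI)
  have "pp Q \<longlonglongrightarrow> 0"
  proof (rule tendsto_sandwich[of "\<lambda>_. 0" "pp Q" sequentially "\<lambda>n. ennreal ((1/2) ^ (n div 2))"])
    show "\<forall>\<^sub>F n in sequentially. 0 \<le> pp Q n" by simp
    show "\<forall>\<^sub>F n in sequentially. pp Q n \<le> ennreal ((1/2) ^ (n div 2))" using bnd by simp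
  qed (use \<open>(\<lambda>n. ennreal ((1/2) ^ (n div 2))) \<longlonglongrightarrow> ennreal 0\<close> in simp_all)
  then have fQ: "finite_rect Q" "vol Q = 0" using finite_rectI[of Q 0] Qb by auto
  have eq: "cube a \<inter> Ecell r = Pi UNIV Q"
    unfolding cube_def Ecell_def Q_def by auto
  have "emeasure mu (cube a \<inter> Ecell r) \<le> vol Q"
    unfolding eq by (rule mu_rect_le[OF fQ(1)]) (auto simp: sets_mu intro!: rect_in_B_inf Qb)
  then show ?thesis using fQ by simp
qed

definition Mr :: "real \<Rightarrow> (nat \<Rightarrow> real) measure" where
  "Mr r = density mu (indicator (Ecell r))"

lemma sets_Mr[simp, measurable_cong]: "sets (Mr r) = sets mu"
  unfolding Mr_def by simp

lemma space_Mr[simp]: "space (Mr r) = UNIV"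
  unfolding Mr_def by (simp add: space_mu)

lemma shift_meas[measurable]: "(\<lambda>x. x 1 - 1/2) \<in> borel_measurable mu"
  by measurable

lemma shift_set: "N \<in> sets borel \<Longrightarrow> {x. x 1 - 1/2 \<in> N} \<in> sets mu"
proof -
  assume [measurable]: "N \<in> sets borel"
  have "{x \<in> space mu. x 1 - 1/2 \<in> N} \<in> sets mu" by measurable
  then show ?thesis by (simp add: space_mu)
qed

lemma shift_set': "N \<in> sets borel \<Longrightarrow> {x. x (Suc 0) - 1/2 \<in> N} \<in> sets mu"
  using shift_set by simp

lemma coord_set: "N \<in> sets borel \<Longrightarrow> {x. x j \<in> N} \<in> sets mu"
  by (simp add: sets_mu coord_in_B_inf)

lemma plus_vimage_borel: "A \<in> sets borel \<Longrightarrow> (+) (c::real) -` A \<in> sets borel"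
proof -
  assume A: "A \<in> sets borel"
  have "(+) c \<in> borel_measurable (borel :: real measure)" by simp
  from measurable_sets[OF this A] show ?thesis by simp
qed

lemma lborel_shift:
  fixes X :: "real set"
  assumes "X \<in> sets borel"
  shows "emeasure lborel ((+) c -` X) = emeasure lborel X"
proof -
  have "emeasure lborel X = emeasure (distr lborel borel ((+) c)) X" by (simp add: lborel_distr_plus)
  also have "\<dots> = emeasure lborel ((+) c -` X \<inter> space lborel)"
    using assms by (intro emeasure_distr) auto
  finally show ?thesis by simp
qed

lemma distr_Mr: "distr (Mr r) lborel (\<lambda>x. x 1 - 1/2) = density lborel (indicator {0..<1})"
proof (rule measure_eqI)
  show "sets (distr (Mr r) lborel (\<lambda>x. x 1 - 1/2)) = sets (density lborel (indicator {0..<1}))" by simp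
next
  fix A assume "A \<in> sets (distr (Mr r) lborel (\<lambda>x. x 1 - 1/2))"
  then have A: "A \<in> sets borel" by simp
  have m: "(\<lambda>x. x 1 - 1/2) \<in> measurable (Mr r) lborel"
    by (simp add: measurable_cong_sets[OF sets_Mr refl])
  have pre: "(\<lambda>x. x 1 - 1/2) -` A \<inter> space (Mr r) = {x. x 1 \<in> (+) (-1/2) -` A}" by auto
  have "emeasure (distr (Mr r) lborel (\<lambda>x. x 1 - 1/2)) A = emeasure (Mr r) {x. x 1 \<in> (+) (-1/2) -` A}"
    using emeasure_distr[OF m, of A] A pre by simp
  also have "\<dots> = emeasure mu (Ecell r \<inter> {x. x 1 \<in> (+) (-1/2) -` A})"
    unfolding Mr_def using A
    using A by (intro emeasure_restricted) (auto intro!: coord_set Ecell_sets shift_set')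
  also have "\<dots> = emeasure lborel ({1/2..<3/2} \<inter> (+) (-1/2) -` A)"
    using A by (intro emeasure_Ecell_coord plus_vimage_borel)
  also have "{1/2..<3/2} \<inter> (+) (-1/2) -` A = (+) (-1/2) -` ({0..<1} \<inter> A)" by auto
  also have "emeasure lborel \<dots> = emeasure lborel ({0..<1} \<inter> A)"
    using A by (intro lborel_shift) auto
  also have "\<dots> = emeasure (density lborel (indicator {0..<1})) A"
    using A by (intro emeasure_restricted[symmetric]) auto
  finally show "emeasure (distr (Mr r) lborel (\<lambda>x. x 1 - 1/2)) A = emeasure (density lborel (indicator {0..<1})) A" .
qed

lemma nn_int_Ecell:
  fixes f :: "real \<Rightarrow> ennreal"
  assumes f[measurable]: "f \<in> borel_measurable borel"
  shows "(\<integral>\<^sup>+ x. indicator (Ecell r) x * f (x 1 - 1/2) \<partial>mu) = (\<integral>\<^sup>+ t. indicator {0..<1} t * f t \<partial>lborel)"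
proof -
  have m: "(\<lambda>x. x 1 - 1/2) \<in> measurable (Mr r) lborel"
    by (simp add: measurable_cong_sets[OF sets_Mr refl])
  have "(\<integral>\<^sup>+ x. indicator (Ecell r) x * f (x 1 - 1/2) \<partial>mu) = (\<integral>\<^sup>+ x. f (x 1 - 1/2) \<partial>Mr r)"
    unfolding Mr_def by (rule nn_integral_density[symmetric]) auto
  also have "\<dots> = (\<integral>\<^sup>+ t. f t \<partial>distr (Mr r) lborel (\<lambda>x. x 1 - 1/2))"
    by (rule nn_integral_distr[symmetric, OF m]) simp
  also have "\<dots> = (\<integral>\<^sup>+ t. indicator {0..<1} t * f t \<partial>lborel)"
    unfolding distr_Mr by (rule nn_integral_density) auto
  finally show ?thesis .
qed

lemma null_Ecell:
  assumes N: "N \<in> sets borel" "emeasure lborel N = 0"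
  shows "emeasure mu (Ecell r \<inter> {x. x 1 - 1/2 \<in> N}) = 0"
proof -
  have m: "(\<lambda>x. x 1 - 1/2) \<in> measurable (Mr r) lborel"
    by (simp add: measurable_cong_sets[OF sets_Mr refl])
  have "emeasure (density lborel (indicator {0..<1})) N = emeasure lborel ({0..<1} \<inter> N)"
    using N by (intro emeasure_restricted) auto
  also have "\<dots> \<le> emeasure lborel N" using N by (intro emeasure_mono) auto
  finally have "emeasure (distr (Mr r) lborel (\<lambda>x. x 1 - 1/2)) N = 0" using N(2) distr_Mr by simp
  then have "emeasure (Mr r) ((\<lambda>x. x 1 - 1/2) -` N \<inter> space (Mr r)) = 0"
    using emeasure_distr[OF m, of N] N by simp
  moreover have "(\<lambda>x. x 1 - 1/2) -` N \<inter> space (Mr r) = {x. x 1 - 1/2 \<in> N}" by auto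
  moreover have "{x. x 1 - 1/2 \<in> N} \<in> sets mu" using shift_set[OF N(1)] .
  ultimately show ?thesis unfolding Mr_def by (simp add: emeasure_restricted Ecell_sets)
qed

lemma L01_sets: "A \<in> sets L01 \<longleftrightarrow> A \<subseteq> {0..1} \<and> A \<in> sets borel"
  unfolding L01_def by (subst sets_restrict_space_iff) auto

lemma space_L01[simp]: "space L01 = {0..1}"
  unfolding L01_def by simp

lemma AE_L01_pull:
  assumes "AE t in L01. P t"
  shows "AE x in mu. x \<in> Ecell r \<longrightarrow> P (x 1 - 1/2)"
proof -
  obtain N where N: "{t \<in> space L01. \<not> P t} \<subseteq> N" "N \<in> sets L01" "emeasure L01 N = 0"
    using AE_E[OF assms] by blast
  have Nb: "N \<in> sets borel" "N \<subseteq> {0..1}" using N(2) L01_sets by auto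
  have "emeasure lborel N = 0" using N(3) Nb unfolding L01_def
    by (subst (asm) emeasure_restrict_space) auto
  then have null: "emeasure mu (Ecell r \<inter> {x. x 1 - 1/2 \<in> N}) = 0" using null_Ecell Nb by auto
  have sets: "Ecell r \<inter> {x. x 1 - 1/2 \<in> N} \<in> sets mu" by (rule sets.Int[OF Ecell_sets shift_set[OF Nb(1)]])
  show ?thesis
  proof (rule AE_I'[of "Ecell r \<inter> {x. x 1 - 1/2 \<in> N}"])
    show "Ecell r \<inter> {x. x 1 - 1/2 \<in> N} \<in> null_sets mu" using null sets by auto
    show "{x \<in> space mu. \<not> (x \<in> Ecell r \<longrightarrow> P (x 1 - 1/2))} \<subseteq> Ecell r \<inter> {x. x 1 - 1/2 \<in> N}"
    proof
      fix x assume x: "x \<in> {x \<in> space mu. \<not> (x \<in> Ecell r \<longrightarrow> P (x 1 - 1/2))}"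
      then have "x 1 - 1/2 \<in> {0..<1}" using Ecell_x1 by blast
      then have "x 1 - 1/2 \<in> {t \<in> space L01. \<not> P t}" using x by auto
      then show "x \<in> Ecell r \<inter> {x. x 1 - 1/2 \<in> N}" using N(1) x by auto
    qed
  qed
qed

lemma nn_int_L01:
  fixes f :: "real \<Rightarrow> ennreal"
  shows "(\<integral>\<^sup>+ t. f t \<partial>L01) = (\<integral>\<^sup>+ t. indicator {0..<1} t * f t \<partial>lborel)"
proof -
  have "(\<integral>\<^sup>+ t. f t \<partial>L01) = (\<integral>\<^sup>+ t. f t * indicator {0..1} t \<partial>lborel)"
    unfolding L01_def by (rule nn_integral_restrict_space) auto
  also have "\<dots> = (\<integral>\<^sup>+ t. indicator {0..<1} t * f t \<partial>lborel)"
    by (rule nn_integral_cong_AE) (use AE_lborel_singleton[of 1] in \<open>auto elim!: eventually_mono split: split_indicator\<close>)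
  finally show ?thesis .
qed

definition extL :: "(real \<Rightarrow> real) \<Rightarrow> real \<Rightarrow> real" where
  "extL h t = (if t \<in> {0..1} then h t else 0)"

definition rof :: "(nat \<Rightarrow> real) \<Rightarrow> real" where
  "rof x = (THE r. x \<in> Ecell r)"

definition Tf :: "real set \<Rightarrow> (real \<Rightarrow> real \<Rightarrow> real) \<Rightarrow> (nat \<Rightarrow> real) \<Rightarrow> real" where
  "Tf U G x = (if \<exists>r\<in>U. x \<in> Ecell r then extL (G (rof x)) (x 1 - 1/2) else 0)"

definition suppL :: "real \<Rightarrow> (real \<Rightarrow> real \<Rightarrow> real) \<Rightarrow> real set" where
  "suppL p g = {r. Lp_norm L01 p (g r) \<noteq> 0}"

definition Top :: "real \<Rightarrow> (real \<Rightarrow> real \<Rightarrow> real) \<Rightarrow> (nat \<Rightarrow> real) \<Rightarrow> real" where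
  "Top p g = Tf (suppL p g) g"

lemma rof_eq: "x \<in> Ecell s \<Longrightarrow> rof x = s"
  unfolding rof_def using Ecell_disj by (intro the_equality) auto

lemma Tf_on: "x \<in> Ecell s \<Longrightarrow> Tf U G x = (if s \<in> U then G s (x 1 - 1/2) else 0)"
proof -
  assume x: "x \<in> Ecell s"
  have rs: "x \<in> Ecell r \<Longrightarrow> r = s" for r using x Ecell_disj[of r s] by auto
  have "(\<exists>r\<in>U. x \<in> Ecell r) \<longleftrightarrow> s \<in> U" using x rs by metis
  moreover have "x 1 - 1/2 \<in> {0..1}" using Ecell_x1[OF x] by auto
  ultimately show ?thesis unfolding Tf_def extL_def using rof_eq[OF x] by auto
qed

lemma Tf_off: "(\<forall>r\<in>U. x \<notin> Ecell r) \<Longrightarrow> Tf U G x = 0"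
  unfolding Tf_def by auto

lemma extL_meas[measurable]:
  fixes h :: "real \<Rightarrow> real"
  assumes "h \<in> borel_measurable L01"
  shows "extL h \<in> borel_measurable borel"
proof -
  have "h \<in> borel_measurable (restrict_space lborel {0..1})" using assms by (simp add: L01_def)
  then have "(\<lambda>x. if x \<in> {0..1} then h x else 0) \<in> borel_measurable lborel"
    by (subst (asm) measurable_restrict_space_iff) auto
  then show ?thesis unfolding extL_def by (simp add: measurable_lborel1)
qed

lemma comp_meas:
  fixes H :: "real \<Rightarrow> real"
  assumes "H \<in> borel_measurable borel"
  shows "(\<lambda>x. H (x 1 - 1/2)) \<in> borel_measurable mu"
  using measurable_compose[OF shift_meas assms] by simp

lemma comp_meas_ind:
  fixes H :: "real \<Rightarrow> real"
  assumes "H \<in> borel_measurable borel"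
  shows "(\<lambda>x. indicator (Ecell r) x * ennreal (\<bar>H (x 1 - 1/2)\<bar> powr p)) \<in> borel_measurable mu"
proof -
  have [measurable]: "(\<lambda>x. H (x 1 - 1/2)) \<in> borel_measurable mu" by (rule comp_meas[OF assms])
  have [measurable]: "Ecell r \<in> sets mu" by (rule Ecell_sets)
  show ?thesis by measurable
qed

lemma Ecell_UN_sets: "countable U \<Longrightarrow> (\<Union>r\<in>U. Ecell r) \<in> sets mu"
  by (intro sets.countable_UN'') (auto intro: Ecell_sets)

lemma Tf_meas:
  assumes U: "countable U" and G: "\<And>r. r \<in> U \<Longrightarrow> G r \<in> borel_measurable L01"
  shows "Tf U G \<in> borel_measurable mu"
proof (rule measurable_piecewise_restrict2[of "\<lambda>n. if n = 0 then UNIV - (\<Union>r\<in>U. Ecell r) else Ecell (from_nat_into U (n - 1))"])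
  fix n :: nat
  show "(if n = 0 then UNIV - (\<Union>r\<in>U. Ecell r) else Ecell (from_nat_into U (n - 1))) \<in> sets mu"
    using Ecell_UN_sets[OF U] Ecell_sets by (auto simp: space_mu[symmetric])
  show "\<exists>h\<in>borel_measurable mu. \<forall>x\<in>(if n = 0 then UNIV - (\<Union>r\<in>U. Ecell r) else Ecell (from_nat_into U (n - 1))). Tf U G x = h x"
  proof (cases "n = 0")
    case True
    then show ?thesis by (intro bexI[of _ "\<lambda>_. 0"]) (auto intro!: Tf_off)
  next
    case False
    define s where "s = from_nat_into U (n - 1)"
    define h where "h x = (if s \<in> U then extL (G s) (x 1 - 1/2) else 0)" for x :: "nat \<Rightarrow> real"
    have "h \<in> borel_measurable mu"
    proof (cases "s \<in> U")
      case True
      have "extL (G s) \<in> borel_measurable borel" using G[OF True] by (rule extL_meas)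
      then show ?thesis unfolding h_def using True comp_meas by simp
    next
      case False
      then have "h = (\<lambda>_. 0)" unfolding h_def by auto
      then show ?thesis by simp
    qed
    moreover have "\<forall>x\<in>Ecell s. Tf U G x = h x"
    proof
      fix x assume x: "x \<in> Ecell s"
      then have "x 1 - 1/2 \<in> {0..1}" using Ecell_x1[OF x] by auto
      then show "Tf U G x = h x" unfolding h_def extL_def using Tf_on[OF x] by simp
    qed
    ultimately show ?thesis using False by (auto simp: s_def)
  qed
next
  show "space mu = (\<Union>n. if n = 0 then UNIV - (\<Union>r\<in>U. Ecell r) else Ecell (from_nat_into U (n - 1)))"
  proof (intro set_eqI iffI)
    fix x assume "x \<in> space mu"
    show "x \<in> (\<Union>n. if n = 0 then UNIV - (\<Union>r\<in>U. Ecell r) else Ecell (from_nat_into U (n - 1)))"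
    proof (cases "\<exists>r\<in>U. x \<in> Ecell r")
      case True
      then obtain r where r: "r \<in> U" "x \<in> Ecell r" by blast
      then obtain m where "from_nat_into U m = r" using from_nat_into_surj[OF U] by blast
      then show ?thesis using r by (intro UN_I[of "Suc m"]) auto
    next
      case False
      then show ?thesis by (intro UN_I[of 0]) auto
    qed
  qed (simp add: space_mu)
qed

lemma Tf_pointwise:
  assumes U: "countable U"
  shows "ennreal (\<bar>Tf U G x\<bar> powr p) =
    (\<integral>\<^sup>+ r. indicator (Ecell r) x * ennreal (\<bar>extL (G r) (x 1 - 1/2)\<bar> powr p) \<partial>count_space U)"
proof (cases "\<exists>s\<in>U. x \<in> Ecell s")
  case True
  then obtain s where s: "s \<in> U" "x \<in> Ecell s" by blast
  have "(\<integral>\<^sup>+ r. indicator (Ecell r) x * ennreal (\<bar>extL (G r) (x 1 - 1/2)\<bar> powr p) \<partial>count_space U) =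
      (\<Sum>r\<in>{s}. indicator (Ecell r) x * ennreal (\<bar>extL (G r) (x 1 - 1/2)\<bar> powr p))"
    by (rule nn_integral_count_space') (use s Ecell_disj in \<open>auto simp: indicator_def\<close>)
  also have "\<dots> = ennreal (\<bar>Tf U G x\<bar> powr p)"
    using s Tf_on[OF s(2)] Ecell_x1[OF s(2)] by (simp add: extL_def)
  finally show ?thesis by simp
next
  case False
  then have "Tf U G x = 0" by (intro Tf_off) auto
  moreover have "(\<integral>\<^sup>+ r. indicator (Ecell r) x * ennreal (\<bar>extL (G r) (x 1 - 1/2)\<bar> powr p) \<partial>count_space U) = 0"
    using False by (subst nn_integral_0_iff_AE) (auto simp: AE_count_space indicator_def)
  ultimately show ?thesis by simp
qed

lemma Tf_nn_integral:
  assumes U: "countable U" and G: "\<And>r. r \<in> U \<Longrightarrow> G r \<in> borel_measurable L01"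
  shows "(\<integral>\<^sup>+ x. ennreal (\<bar>Tf U G x\<bar> powr p) \<partial>mu) =
    (\<integral>\<^sup>+ r. (\<integral>\<^sup>+ t. ennreal (\<bar>G r t\<bar> powr p) \<partial>L01) \<partial>count_space U)"
proof -
  have "(\<integral>\<^sup>+ x. ennreal (\<bar>Tf U G x\<bar> powr p) \<partial>mu) =
      (\<integral>\<^sup>+ x. (\<integral>\<^sup>+ r. indicator (Ecell r) x * ennreal (\<bar>extL (G r) (x 1 - 1/2)\<bar> powr p) \<partial>count_space U) \<partial>mu)"
    using Tf_pointwise[OF U] by simp
  also have "\<dots> = (\<integral>\<^sup>+ r. (\<integral>\<^sup>+ x. indicator (Ecell r) x * ennreal (\<bar>extL (G r) (x 1 - 1/2)\<bar> powr p) \<partial>mu) \<partial>count_space U)"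
  proof (rule nn_integral_count_space_nn_integral[OF U])
    fix r assume "r \<in> U"
    then have "extL (G r) \<in> borel_measurable borel" using G extL_meas by blast
    then show "(\<lambda>x. indicator (Ecell r) x * ennreal (\<bar>extL (G r) (x 1 - 1/2)\<bar> powr p)) \<in> borel_measurable mu"
      by (rule comp_meas_ind)
  qed
  also have "\<dots> = (\<integral>\<^sup>+ r. (\<integral>\<^sup>+ t. ennreal (\<bar>G r t\<bar> powr p) \<partial>L01) \<partial>count_space U)"
  proof (rule nn_integral_cong)
    fix r assume "r \<in> space (count_space U)"
    then have [measurable]: "extL (G r) \<in> borel_measurable borel" using G extL_meas by auto
    have "(\<integral>\<^sup>+ x. indicator (Ecell r) x * ennreal (\<bar>extL (G r) (x 1 - 1/2)\<bar> powr p) \<partial>mu) =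
        (\<integral>\<^sup>+ t. indicator {0..<1} t * ennreal (\<bar>extL (G r) t\<bar> powr p) \<partial>lborel)"
      by (rule nn_int_Ecell) measurable
    also have "\<dots> = (\<integral>\<^sup>+ t. ennreal (\<bar>extL (G r) t\<bar> powr p) \<partial>L01)"
      by (rule nn_int_L01[symmetric])
    also have "\<dots> = (\<integral>\<^sup>+ t. ennreal (\<bar>G r t\<bar> powr p) \<partial>L01)"
      by (rule nn_integral_cong) (simp add: extL_def)
    finally show "(\<integral>\<^sup>+ x. indicator (Ecell r) x * ennreal (\<bar>extL (G r) (x 1 - 1/2)\<bar> powr p) \<partial>mu) =
        (\<integral>\<^sup>+ t. ennreal (\<bar>G r t\<bar> powr p) \<partial>L01)" .
  qed
  finally show ?thesis .
qed

lemma cube_sets: "cube a \<in> sets mu"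
  unfolding cube_def sets_mu by (rule rect_in_B_inf) simp

lemma Tf_cube:
  assumes U: "countable U"
  shows "(\<integral>\<^sup>+ x \<in> cube a. ennreal (\<bar>Tf U G x\<bar> powr p) \<partial>mu) = 0"
proof -
  have null: "(\<Union>r\<in>U. cube a \<inter> Ecell r) \<in> null_sets mu"
    using cube_Ecell_null cube_sets Ecell_sets
    by (intro null_sets_UN') (auto simp: U null_sets_def)
  have "AE x in mu. ennreal (\<bar>Tf U G x\<bar> powr p) * indicator (cube a) x = 0"
  proof (rule AE_I'[OF null])
    show "{x \<in> space mu. ennreal (\<bar>Tf U G x\<bar> powr p) * indicator (cube a) x \<noteq> 0} \<subseteq> (\<Union>r\<in>U. cube a \<inter> Ecell r)"
    proof
      fix x assume x: "x \<in> {x \<in> space mu. ennreal (\<bar>Tf U G x\<bar> powr p) * indicator (cube a) x \<noteq> 0}"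
      then have "x \<in> cube a" by (auto simp: indicator_def split: if_splits)
      moreover have "\<exists>r\<in>U. x \<in> Ecell r"
        using x Tf_off[of U x G] by auto
      ultimately show "x \<in> (\<Union>r\<in>U. cube a \<inter> Ecell r)" by blast
    qed
  qed
  from nn_integral_cong_AE[OF this] show ?thesis by simp
qed

lemma Lp_norm_AE0:
  assumes "AE x in M. f x = 0" "p > 0"
  shows "Lp_norm M p f = 0"
proof -
  have "AE x in M. ennreal (\<bar>f x\<bar> powr p) = 0"
    using assms(1) by (rule eventually_mono) simp
  from nn_integral_cong_AE[OF this]
  have "(\<integral>\<^sup>+ x. ennreal (\<bar>f x\<bar> powr p) \<partial>M) = (\<integral>\<^sup>+ x. 0 \<partial>M)" by simp
  then show ?thesis unfolding Lp_norm_def by simp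
qed

lemma Lp_norm_nonneg: "Lp_norm M p f \<ge> 0"
  unfolding Lp_norm_def by simp

lemma Lp_norm_powr:
  assumes "memLp M p f" "p > 0"
  shows "ennreal (Lp_norm M p f powr p) = (\<integral>\<^sup>+ x. ennreal (\<bar>f x\<bar> powr p) \<partial>M)"
proof -
  have fin: "(\<integral>\<^sup>+ x. ennreal (\<bar>f x\<bar> powr p) \<partial>M) < \<infinity>" using assms unfolding memLp_def by auto
  have "Lp_norm M p f powr p = enn2real (\<integral>\<^sup>+ x. ennreal (\<bar>f x\<bar> powr p) \<partial>M)"
    unfolding Lp_norm_def using assms(2) by (simp add: powr_powr)
  then show ?thesis using fin by (simp add: ennreal_enn2real_if less_top)
qed

lemma Lp0_AE:
  assumes "memLp M p f" "p > 0" "Lp_norm M p f = 0"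
  shows "AE x in M. f x = 0"
proof -
  have "(\<integral>\<^sup>+ x. ennreal (\<bar>f x\<bar> powr p) \<partial>M) = 0"
    using Lp_norm_powr[OF assms(1,2)] assms(2,3) by simp
  moreover have "f \<in> borel_measurable M" using assms(1) unfolding memLp_def by auto
  ultimately have "AE x in M. ennreal (\<bar>f x\<bar> powr p) = 0"
    by (subst (asm) nn_integral_0_iff_AE) auto
  then show ?thesis by (rule eventually_mono) simp
qed

lemma count_supp_bound:
  fixes \<phi> :: "'a \<Rightarrow> ennreal"
  assumes F: "\<And>F. finite F \<Longrightarrow> (\<Sum>r\<in>F. \<phi> r) \<le> C" and C: "C < \<infinity>"
  shows "countable {r. \<phi> r \<noteq> 0}"
proof -
  have fin: "\<phi> r < top" for r using F[of "{r}"] C by (simp add: le_less_trans)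
  define \<psi> where "\<psi> r = enn2real (\<phi> r)" for r
  have "\<psi> summable_on UNIV"
  proof (rule nonneg_bdd_above_summable_on)
    show "\<And>x. x \<in> UNIV \<Longrightarrow> 0 \<le> \<psi> x" by (simp add: \<psi>_def)
    show "bdd_above (sum \<psi> ` {F. F \<subseteq> UNIV \<and> finite F})"
    proof (rule bdd_aboveI)
      fix y assume "y \<in> sum \<psi> ` {F. F \<subseteq> UNIV \<and> finite F}"
      then obtain F where F': "finite F" "y = sum \<psi> F" by auto
      have "sum \<psi> F = enn2real (\<Sum>r\<in>F. \<phi> r)"
        using fin by (subst enn2real_sum) (auto simp: \<psi>_def comp_def)
      also have "\<dots> \<le> enn2real C" using F[OF F'(1)] C by (intro enn2real_mono) auto
      finally show "y \<le> enn2real C" using F' by simp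
    qed
  qed
  then have "countable {r \<in> UNIV. \<psi> r \<noteq> 0}" by (rule summable_countable_real)
  moreover have "{r \<in> UNIV. \<psi> r \<noteq> 0} = {r. \<phi> r \<noteq> 0}"
    using fin by (auto simp: \<psi>_def enn2real_eq_0_iff less_le)
  ultimately show ?thesis by simp
qed

lemma count_finite_le:
  fixes \<phi> :: "'a \<Rightarrow> ennreal"
  assumes "finite F"
  shows "(\<Sum>r\<in>F. \<phi> r) \<le> (\<integral>\<^sup>+ r. \<phi> r \<partial>count_space UNIV)"
proof -
  have "(\<Sum>r\<in>F. \<phi> r) = (\<integral>\<^sup>+ r. \<phi> r \<partial>count_space F)" using assms by (simp add: nn_integral_count_space_finite)
  also have "\<dots> = (\<integral>\<^sup>+ r. \<phi> r * indicator F r \<partial>count_space UNIV)"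
    by (rule nn_integral_count_space_indicator) simp
  also have "\<dots> \<le> (\<integral>\<^sup>+ r. \<phi> r \<partial>count_space UNIV)"
    by (intro nn_integral_mono) (auto simp: indicator_def)
  finally show ?thesis .
qed

lemma count_UNIV_eq:
  fixes \<phi> :: "'a \<Rightarrow> ennreal"
  assumes "{r. \<phi> r \<noteq> 0} \<subseteq> V"
  shows "(\<integral>\<^sup>+ r. \<phi> r \<partial>count_space UNIV) = (\<integral>\<^sup>+ r. \<phi> r \<partial>count_space V)"
  using assms by (intro nn_integral_count_space_eq) auto

lemma powr_le0_iff: "(x::real) \<ge> 0 \<Longrightarrow> x powr p \<le> 0 \<longleftrightarrow> x = 0"
  by (metis powr_gt_zero not_le)

lemma ellp_phi_supp:
  assumes "p > 0"
  shows "suppL p g = {r. ennreal (Lp_norm L01 p (g r) powr p) \<noteq> 0}"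
  unfolding suppL_def using Lp_norm_nonneg[of L01 p]
  by (auto simp: ennreal_eq_0_iff powr_le0_iff)

lemma ellp_supp_countable:
  assumes g: "g \<in> ellp p" and p: "p > 0"
  shows "countable (suppL p g)"
proof -
  let ?C = "\<integral>\<^sup>+ k. ennreal (Lp_norm L01 p (g k) powr p) \<partial>count_space UNIV"
  have "countable {r. ennreal (Lp_norm L01 p (g r) powr p) \<noteq> 0}"
  proof (rule count_supp_bound[of _ ?C])
    fix F :: "real set" assume "finite F"
    then show "(\<Sum>r\<in>F. ennreal (Lp_norm L01 p (g r) powr p)) \<le> ?C" by (rule count_finite_le)
  qed (use g in \<open>simp add: ellp_def\<close>)
  then show ?thesis using ellp_phi_supp[OF p] by simp
qed

lemma Top_props:
  assumes g: "g \<in> ellp p" and p: "p \<ge> 1"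
  shows "Top p g \<in> Bp p" "Lp_norm mu p (Top p g) = ellp_norm p g"
proof -
  have p0: "p > 0" using p by simp
  have U: "countable (suppL p g)" by (rule ellp_supp_countable[OF g p0])
  have mem: "\<And>r. memLp L01 p (g r)" using g by (auto simp: ellp_def)
  have G: "\<And>r. g r \<in> borel_measurable L01" using mem by (auto simp: memLp_def)
  have meas: "Top p g \<in> borel_measurable mu" unfolding Top_def by (rule Tf_meas[OF U G])
  have "(\<integral>\<^sup>+ x. ennreal (\<bar>Top p g x\<bar> powr p) \<partial>mu) =
      (\<integral>\<^sup>+ r. (\<integral>\<^sup>+ t. ennreal (\<bar>g r t\<bar> powr p) \<partial>L01) \<partial>count_space (suppL p g))"
    unfolding Top_def by (rule Tf_nn_integral[OF U G])
  also have "\<dots> = (\<integral>\<^sup>+ r. ennreal (Lp_norm L01 p (g r) powr p) \<partial>count_space (suppL p g))"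
    by (rule nn_integral_cong) (simp add: Lp_norm_powr[OF mem p0])
  also have "\<dots> = (\<integral>\<^sup>+ r. ennreal (Lp_norm L01 p (g r) powr p) \<partial>count_space UNIV)"
    by (rule count_UNIV_eq[symmetric]) (simp add: ellp_phi_supp[OF p0])
  finally have eq: "(\<integral>\<^sup>+ x. ennreal (\<bar>Top p g x\<bar> powr p) \<partial>mu) =
      (\<integral>\<^sup>+ r. ennreal (Lp_norm L01 p (g r) powr p) \<partial>count_space UNIV)" .
  have fin: "(\<integral>\<^sup>+ x. ennreal (\<bar>Top p g x\<bar> powr p) \<partial>mu) < \<infinity>"
    using g eq by (simp add: ellp_def)
  show "Top p g \<in> Bp p"
    unfolding Bp_def memLp_def using meas fin Tf_cube[OF U] by (simp add: Top_def)
  show "Lp_norm mu p (Top p g) = ellp_norm p g"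
    unfolding Lp_norm_def ellp_norm_def eq ..
qed

lemma memLp_comb:
  assumes f: "memLp M p f" and g: "memLp M p g" and p: "p > 0"
  shows "memLp M p (\<lambda>x. a * f x + b * g x)"
proof -
  have [measurable]: "f \<in> borel_measurable M" "g \<in> borel_measurable M" using f g by (auto simp: memLp_def)
  have pt: "\<bar>a * u + b * v\<bar> powr p \<le> 2 powr p * (\<bar>a\<bar> powr p * \<bar>u\<bar> powr p + \<bar>b\<bar> powr p * \<bar>v\<bar> powr p)" for u v :: real
  proof -
    have "\<bar>a * u + b * v\<bar> \<le> 2 * max \<bar>a * u\<bar> \<bar>b * v\<bar>" by (simp add: abs_triangle_ineq max_def order_trans[OF abs_triangle_ineq])
    then have "\<bar>a * u + b * v\<bar> powr p \<le> (2 * max \<bar>a * u\<bar> \<bar>b * v\<bar>) powr p" using p by (intro powr_mono2) auto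
    also have "\<dots> = 2 powr p * max \<bar>a * u\<bar> \<bar>b * v\<bar> powr p" by (simp add: powr_mult)
    also have "max \<bar>a * u\<bar> \<bar>b * v\<bar> powr p \<le> \<bar>a * u\<bar> powr p + \<bar>b * v\<bar> powr p" by (simp add: max_def)
    also have "\<bar>a * u\<bar> powr p = \<bar>a\<bar> powr p * \<bar>u\<bar> powr p" by (simp add: abs_mult powr_mult)
    also have "\<bar>b * v\<bar> powr p = \<bar>b\<bar> powr p * \<bar>v\<bar> powr p" by (simp add: abs_mult powr_mult)
    finally show ?thesis by simp
  qed
  have "(\<integral>\<^sup>+ x. ennreal (\<bar>a * f x + b * g x\<bar> powr p) \<partial>M) \<le>
      (\<integral>\<^sup>+ x. ennreal (2 powr p * \<bar>a\<bar> powr p) * ennreal (\<bar>f x\<bar> powr p) + ennreal (2 powr p * \<bar>b\<bar> powr p) * ennreal (\<bar>g x\<bar> powr p) \<partial>M)"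
  proof (rule nn_integral_mono)
    fix x
    have "ennreal (\<bar>a * f x + b * g x\<bar> powr p) \<le> ennreal (2 powr p * \<bar>a\<bar> powr p * \<bar>f x\<bar> powr p + 2 powr p * \<bar>b\<bar> powr p * \<bar>g x\<bar> powr p)"
      using pt[of "f x" "g x"] by (intro ennreal_leI) (simp add: algebra_simps)
    also have "\<dots> = ennreal (2 powr p * \<bar>a\<bar> powr p) * ennreal (\<bar>f x\<bar> powr p) + ennreal (2 powr p * \<bar>b\<bar> powr p) * ennreal (\<bar>g x\<bar> powr p)"
      by (simp add: ennreal_mult[symmetric] ennreal_plus[symmetric] del: ennreal_plus)
    finally show "ennreal (\<bar>a * f x + b * g x\<bar> powr p) \<le> \<dots>" .
  qed
  also have "\<dots> = ennreal (2 powr p * \<bar>a\<bar> powr p) * (\<integral>\<^sup>+ x. ennreal (\<bar>f x\<bar> powr p) \<partial>M) + ennreal (2 powr p * \<bar>b\<bar> powr p) * (\<integral>\<^sup>+ x. ennreal (\<bar>g x\<bar> powr p) \<partial>M)"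
    by (simp add: nn_integral_add nn_integral_cmult)
  also have "\<dots> < \<infinity>" using f g by (simp add: memLp_def ennreal_mult_less_top)
  finally show ?thesis unfolding memLp_def by simp
qed

lemma Top_lin:
  assumes p: "p > 0"
    and m1: "\<And>r. memLp L01 p (g1 r)" and m2: "\<And>r. memLp L01 p (g2 r)" and m3: "\<And>r. memLp L01 p (g3 r)"
    and c1: "countable (suppL p g1)" and c2: "countable (suppL p g2)" and c3: "countable (suppL p g3)"
    and ae: "\<And>r. AE t in L01. g3 r t = a * g1 r t + b * g2 r t"
  shows "AE x in mu. Top p g3 x = a * Top p g1 x + b * Top p g2 x"
proof -
  define U where "U = suppL p g1 \<union> suppL p g2 \<union> suppL p g3"
  have U: "countable U" using c1 c2 c3 by (simp add: U_def)
  have z: "r \<notin> suppL p h \<Longrightarrow> memLp L01 p (h r) \<Longrightarrow> AE t in L01. h r t = 0" for r h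
    by (rule Lp0_AE) (use p in \<open>auto simp: suppL_def\<close>)
  have aeL: "AE t in L01. g3 r t = a * g1 r t + b * g2 r t \<and>
      (r \<notin> suppL p g1 \<longrightarrow> g1 r t = 0) \<and> (r \<notin> suppL p g2 \<longrightarrow> g2 r t = 0) \<and> (r \<notin> suppL p g3 \<longrightarrow> g3 r t = 0)" for r
  proof -
    have "AE t in L01. r \<notin> suppL p g1 \<longrightarrow> g1 r t = 0"
      by (cases "r \<in> suppL p g1") (auto intro: z[OF _ m1])
    moreover have "AE t in L01. r \<notin> suppL p g2 \<longrightarrow> g2 r t = 0"
      by (cases "r \<in> suppL p g2") (auto intro: z[OF _ m2])
    moreover have "AE t in L01. r \<notin> suppL p g3 \<longrightarrow> g3 r t = 0"
      by (cases "r \<in> suppL p g3") (auto intro: z[OF _ m3])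
    ultimately show ?thesis using ae[of r] by eventually_elim auto
  qed
  have "AE x in mu. \<forall>r\<in>U. x \<in> Ecell r \<longrightarrow> (g3 r (x 1 - 1/2) = a * g1 r (x 1 - 1/2) + b * g2 r (x 1 - 1/2) \<and>
      (r \<notin> suppL p g1 \<longrightarrow> g1 r (x 1 - 1/2) = 0) \<and> (r \<notin> suppL p g2 \<longrightarrow> g2 r (x 1 - 1/2) = 0) \<and>
      (r \<notin> suppL p g3 \<longrightarrow> g3 r (x 1 - 1/2) = 0))"
    by (rule AE_ball_countable'[OF _ U]) (rule AE_L01_pull[OF aeL])
  then show ?thesis
  proof (rule eventually_mono)
    fix x assume H: "\<forall>r\<in>U. x \<in> Ecell r \<longrightarrow> (g3 r (x 1 - 1/2) = a * g1 r (x 1 - 1/2) + b * g2 r (x 1 - 1/2) \<and>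
      (r \<notin> suppL p g1 \<longrightarrow> g1 r (x 1 - 1/2) = 0) \<and> (r \<notin> suppL p g2 \<longrightarrow> g2 r (x 1 - 1/2) = 0) \<and>
      (r \<notin> suppL p g3 \<longrightarrow> g3 r (x 1 - 1/2) = 0))"
    show "Top p g3 x = a * Top p g1 x + b * Top p g2 x"
    proof (cases "\<exists>s\<in>U. x \<in> Ecell s")
      case True
      then obtain s where s: "s \<in> U" "x \<in> Ecell s" by blast
      show ?thesis unfolding Top_def Tf_on[OF s(2)] using H s by auto
    next
      case False
      then show ?thesis unfolding Top_def by (subst (1 2 3) Tf_off) (auto simp: U_def)
    qed
  qed
qed

lemma powr_le_self_aux: "0 \<le> (t::real) \<Longrightarrow> t \<le> 1 \<Longrightarrow> 1 \<le> p \<Longrightarrow> t powr p \<le> t"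
  by (metis powr_mono' powr_one_gt_zero_iff powr_one nle_le order.trans)

lemma abs_powr_convex:
  assumes p: "1 \<le> p"
  shows "convex_on UNIV (\<lambda>x::real. \<bar>x\<bar> powr p)"
proof (rule convex_onI)
  fix t x y :: real assume t: "0 < t" "t < 1"
  have 1: "\<bar>(1-t)*x + t*y\<bar> \<le> (1-t)*\<bar>x\<bar> + t*\<bar>y\<bar>"
    using t abs_triangle_ineq[of "(1-t)*x" "t*y"] by (simp add: abs_mult)
  have 2: "((1-t)*\<bar>x\<bar> + t*\<bar>y\<bar>) powr p \<le> (1-t)*\<bar>x\<bar> powr p + t * \<bar>y\<bar> powr p"
  proof (cases "x = 0 \<or> y = 0")
    case False
    then have "\<bar>x\<bar> \<in> {0<..}" "\<bar>y\<bar> \<in> {0<..}" by auto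
    from convex_onD[OF powr_convex[OF p] _ _ this, of t] t show ?thesis by simp
  next
    case True
    then show ?thesis
    proof
      assume "x = 0"
      then have "((1-t)*\<bar>x\<bar> + t*\<bar>y\<bar>) powr p = t powr p * \<bar>y\<bar> powr p"
        using t by (simp add: powr_mult)
      also have "\<dots> \<le> t * \<bar>y\<bar> powr p"
        using t p by (intro mult_right_mono powr_le_self_aux) auto
      finally show ?thesis using \<open>x = 0\<close> p by simp
    next
      assume "y = 0"
      then have "((1-t)*\<bar>x\<bar> + t*\<bar>y\<bar>) powr p = (1-t) powr p * \<bar>x\<bar> powr p"
        using t by (simp add: powr_mult)
      also have "\<dots> \<le> (1-t) * \<bar>x\<bar> powr p"
        using t p by (intro mult_right_mono powr_le_self_aux) auto
      finally show ?thesis using \<open>y = 0\<close> p by simp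
    qed
  qed
  have "\<bar>(1-t)*x + t*y\<bar> powr p \<le> ((1-t)*\<bar>x\<bar> + t*\<bar>y\<bar>) powr p"
    using 1 p by (intro powr_mono2) auto
  with 2 show "\<bar>(1 - t) *\<^sub>R x + t *\<^sub>R y\<bar> powr p \<le> (1 - t) * \<bar>x\<bar> powr p + t * \<bar>y\<bar> powr p"
    by simp
qed simp

definition Fsub :: "(nat \<Rightarrow> real) measure" where
  "Fsub = vimage_algebra UNIV (\<lambda>x. x 1) borel"

lemma space_Fsub[simp]: "space Fsub = UNIV"
  unfolding Fsub_def by simp

lemma sets_Fsub: "sets Fsub = {(\<lambda>x. x 1) -` A \<inter> UNIV | A. A \<in> sets borel}"
  unfolding Fsub_def by (rule sets_vimage_algebra2) simp

lemma coord_Fsub: "(\<lambda>x. x 1) \<in> borel_measurable Fsub"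
  unfolding Fsub_def by (rule measurable_vimage_algebra1) simp

lemma shift_Fsub: "(\<lambda>x. x 1 - 1/2) \<in> borel_measurable Fsub"
  using coord_Fsub by measurable

lemma subalg_Mr: "subalgebra (Mr r) Fsub"
  unfolding subalgebra_def
proof
  show "space Fsub = space (Mr r)" by simp
  show "sets Fsub \<subseteq> sets (Mr r)"
  proof
    fix X assume "X \<in> sets Fsub"
    then obtain A where "A \<in> sets borel" "X = (\<lambda>x. x 1) -` A \<inter> UNIV" unfolding sets_Fsub by auto
    then show "X \<in> sets (Mr r)" using coord_set[of A 1] by (simp add: vimage_def)
  qed
qed

lemma emeasure_Mr_space: "emeasure (Mr r) (space (Mr r)) = 1"
  unfolding Mr_def using emeasure_Ecell[of r] Ecell_sets sets.top[of mu]
  by (subst emeasure_restricted) (auto simp: space_mu)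

lemma finite_Mr: "finite_measure (Mr r)"
  by (rule finite_measureI) (use emeasure_Mr_space[of r] in simp)

lemma sfs: "sigma_finite_subalgebra (Mr r) Fsub"
proof -
  interpret finite_measure "Mr r" by (rule finite_Mr)
  have "finite_measure_subalgebra (Mr r) Fsub"
    by unfold_locales (rule subalg_Mr)
  then show ?thesis by (rule finite_measure_subalgebra_is_sigma_finite)
qed

lemma F_factor:
  fixes h :: "(nat \<Rightarrow> real) \<Rightarrow> real"
  assumes h: "h \<in> borel_measurable Fsub" and xy: "x 1 = y 1"
  shows "h x = h y"
proof -
  have "h -` {h x} \<inter> space Fsub \<in> sets Fsub" by (intro measurable_sets[OF h] borel_closed) simp
  then obtain A where A: "h -` {h x} \<inter> UNIV = (\<lambda>x. x 1) -` A \<inter> UNIV" unfolding sets_Fsub by auto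
  have "x \<in> h -` {h x} \<inter> UNIV" by simp
  then have "x 1 \<in> A" using A by blast
  then have "y \<in> h -` {h x} \<inter> UNIV" using A xy by (metis IntI UNIV_I vimageI)
  then show ?thesis by simp
qed

definition cnd :: "real \<Rightarrow> ((nat \<Rightarrow> real) \<Rightarrow> real) \<Rightarrow> (nat \<Rightarrow> real) \<Rightarrow> real" where
  "cnd r f = real_cond_exp (Mr r) Fsub f"

definition base :: "real \<Rightarrow> nat \<Rightarrow> real" where
  "base t = (\<lambda>i. if i = 1 then t else 0)"

definition Sop :: "((nat \<Rightarrow> real) \<Rightarrow> real) \<Rightarrow> real \<Rightarrow> real \<Rightarrow> real" where
  "Sop f = (\<lambda>r t. cnd r f (base (t + 1/2)))"

definition Pop :: "real \<Rightarrow> ((nat \<Rightarrow> real) \<Rightarrow> real) \<Rightarrow> (nat \<Rightarrow> real) \<Rightarrow> real" where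
  "Pop p f = Top p (Sop f)"

lemma cnd_Fsub: "cnd r f \<in> borel_measurable Fsub"
  unfolding cnd_def by (rule borel_measurable_cond_exp)

lemma cnd_meas: "cnd r f \<in> borel_measurable (Mr r)"
  unfolding cnd_def by (rule borel_measurable_cond_exp2)

lemma cnd_factor: "cnd r f x = Sop f r (x 1 - 1/2)"
  unfolding Sop_def by (rule F_factor[OF cnd_Fsub]) (simp add: base_def)

lemma base_meas: "(\<lambda>t. base (t + 1/2)) \<in> measurable borel Fsub"
  unfolding Fsub_def by (rule measurable_vimage_algebra2) (auto simp: base_def)

lemma Sop_borel: "Sop f r \<in> borel_measurable borel"
  unfolding Sop_def using measurable_compose[OF base_meas cnd_Fsub] by simp

lemma Sop_L01: "Sop f r \<in> borel_measurable L01"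
  unfolding L01_def by (rule measurable_restrict_space1) (simp add: Sop_borel measurable_lborel1)

lemma Mr_nn_integral:
  assumes "F \<in> borel_measurable mu"
  shows "(\<integral>\<^sup>+ x. F x \<partial>Mr r) = (\<integral>\<^sup>+ x. indicator (Ecell r) x * F x \<partial>mu)"
  unfolding Mr_def using assms Ecell_sets by (intro nn_integral_density) auto

lemma Lp_integrable:
  assumes M: "finite_measure M" and g: "g \<in> borel_measurable M"
    and fin: "(\<integral>\<^sup>+ x. ennreal (\<bar>g x\<bar> powr p) \<partial>M) < \<infinity>" and p: "p \<ge> 1"
  shows "integrable M g" "integrable M (\<lambda>x. \<bar>g x\<bar> powr p)"
proof -
  interpret finite_measure M by (rule M)
  show "integrable M (\<lambda>x. \<bar>g x\<bar> powr p)"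
    using fin g by (intro integrableI_bounded) auto
  have le: "\<bar>u\<bar> \<le> 1 + \<bar>u\<bar> powr p" for u :: real
  proof (cases "\<bar>u\<bar> \<le> 1")
    case True then show ?thesis using powr_ge_zero[of "\<bar>u\<bar>" p] by linarith
  next
    case False
    then have "\<bar>u\<bar> powr 1 \<le> \<bar>u\<bar> powr p" using p by (intro powr_mono) auto
    then show ?thesis using False by simp
  qed
  have "(\<integral>\<^sup>+ x. ennreal (norm (g x)) \<partial>M) \<le> (\<integral>\<^sup>+ x. 1 + ennreal (\<bar>g x\<bar> powr p) \<partial>M)"
  proof (intro nn_integral_mono)
    fix x
    have "ennreal (norm (g x)) \<le> ennreal (1 + \<bar>g x\<bar> powr p)" using le[of "g x"] by (intro ennreal_leI) simp
    also have "\<dots> = 1 + ennreal (\<bar>g x\<bar> powr p)" by (simp add: ennreal_plus)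
    finally show "ennreal (norm (g x)) \<le> 1 + ennreal (\<bar>g x\<bar> powr p)" .
  qed
  also have "\<dots> = emeasure M (space M) + (\<integral>\<^sup>+ x. ennreal (\<bar>g x\<bar> powr p) \<partial>M)"
    using g by (subst nn_integral_add) auto
  also have "\<dots> < \<infinity>" using fin by (simp add: less_top[symmetric])
  finally show "integrable M g" using g by (intro integrableI_bounded) auto
qed

lemma powr_meas:
  assumes "f \<in> borel_measurable M"
  shows "(\<lambda>x. ennreal (\<bar>f x\<bar> powr p)) \<in> borel_measurable M"
proof -
  have "(\<lambda>y::real. ennreal (\<bar>y\<bar> powr p)) \<in> borel_measurable borel" by measurable
  from measurable_compose[OF assms this] show ?thesis by simp
qed

lemma Bp_integrable:
  assumes f: "f \<in> Bp p" and p: "p \<ge> 1"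
  shows "integrable (Mr r) f" "integrable (Mr r) (\<lambda>x. \<bar>f x\<bar> powr p)"
proof -
  have fm: "f \<in> borel_measurable mu" and fin: "(\<integral>\<^sup>+ x. ennreal (\<bar>f x\<bar> powr p) \<partial>mu) < \<infinity>"
    using f by (auto simp: Bp_def memLp_def)
  have fm': "f \<in> borel_measurable (Mr r)" using fm by (simp add: measurable_cong_sets[OF sets_Mr refl])
  have "(\<integral>\<^sup>+ x. ennreal (\<bar>f x\<bar> powr p) \<partial>Mr r) = (\<integral>\<^sup>+ x. indicator (Ecell r) x * ennreal (\<bar>f x\<bar> powr p) \<partial>mu)"
    using fm by (intro Mr_nn_integral powr_meas)
  also have "\<dots> \<le> (\<integral>\<^sup>+ x. ennreal (\<bar>f x\<bar> powr p) \<partial>mu)"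
    by (intro nn_integral_mono) (auto simp: indicator_def)
  finally have "(\<integral>\<^sup>+ x. ennreal (\<bar>f x\<bar> powr p) \<partial>Mr r) < \<infinity>" using fin by (simp add: le_less_trans)
  then show "integrable (Mr r) f" "integrable (Mr r) (\<lambda>x. \<bar>f x\<bar> powr p)"
    using Lp_integrable[OF finite_Mr fm' _ p] by auto
qed

lemma mu_Mr_meas: "f \<in> borel_measurable mu \<Longrightarrow> f \<in> borel_measurable (Mr r)"
  by (simp add: measurable_cong_sets[OF sets_Mr refl])

lemma jensen_bound:
  assumes f: "f \<in> Bp p" and p: "p \<ge> 1"
  shows "(\<integral>\<^sup>+ x. ennreal (\<bar>cnd r f x\<bar> powr p) \<partial>Mr r) \<le> (\<integral>\<^sup>+ x. ennreal (\<bar>f x\<bar> powr p) \<partial>Mr r)"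
proof -
  interpret S: sigma_finite_subalgebra "Mr r" Fsub by (rule sfs)
  have i1: "integrable (Mr r) f" and i2: "integrable (Mr r) (\<lambda>x. \<bar>f x\<bar> powr p)"
    using Bp_integrable[OF f p] by auto
  have J: "AE x in Mr r. \<bar>cnd r f x\<bar> powr p \<le> cnd r (\<lambda>x. \<bar>f x\<bar> powr p) x"
    unfolding cnd_def
    by (rule S.real_cond_exp_jensens_inequality(2)[where I=UNIV and q="\<lambda>x. \<bar>x\<bar> powr p"])
       (use i1 i2 abs_powr_convex[OF p] in auto)
  have i3: "integrable (Mr r) (cnd r (\<lambda>x. \<bar>f x\<bar> powr p))"
    unfolding cnd_def by (rule S.real_cond_exp_int(1)[OF i2])
  have pos: "AE x in Mr r. 0 \<le> cnd r (\<lambda>x. \<bar>f x\<bar> powr p) x"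
    unfolding cnd_def by (rule S.real_cond_exp_pos) (use i2 in auto)
  have "(\<integral>\<^sup>+ x. ennreal (\<bar>cnd r f x\<bar> powr p) \<partial>Mr r) \<le> (\<integral>\<^sup>+ x. ennreal (cnd r (\<lambda>x. \<bar>f x\<bar> powr p) x) \<partial>Mr r)"
    by (rule nn_integral_mono_AE) (use J in \<open>auto intro: eventually_mono ennreal_leI\<close>)
  also have "\<dots> = ennreal (\<integral>x. cnd r (\<lambda>x. \<bar>f x\<bar> powr p) x \<partial>Mr r)"
    by (rule nn_integral_eq_integral[OF i3 pos])
  also have "(\<integral>x. cnd r (\<lambda>x. \<bar>f x\<bar> powr p) x \<partial>Mr r) = (\<integral>x. \<bar>f x\<bar> powr p \<partial>Mr r)"
    unfolding cnd_def by (rule S.real_cond_exp_int(2)[OF i2])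
  also have "ennreal (\<integral>x. \<bar>f x\<bar> powr p \<partial>Mr r) = (\<integral>\<^sup>+ x. ennreal (\<bar>f x\<bar> powr p) \<partial>Mr r)"
    by (rule nn_integral_eq_integral[OF i2, symmetric]) simp
  finally show ?thesis .
qed

lemma Sop_norm_bound:
  assumes f: "f \<in> Bp p" and p: "p \<ge> 1"
  shows "(\<integral>\<^sup>+ t. ennreal (\<bar>Sop f r t\<bar> powr p) \<partial>L01) \<le> (\<integral>\<^sup>+ x. indicator (Ecell r) x * ennreal (\<bar>f x\<bar> powr p) \<partial>mu)"
proof -
  have fm: "f \<in> borel_measurable mu" using f by (auto simp: Bp_def memLp_def)
  have cm: "cnd r f \<in> borel_measurable mu" using cnd_meas[of r f] by (simp add: measurable_cong_sets[OF sets_Mr refl])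
  have "(\<integral>\<^sup>+ t. ennreal (\<bar>Sop f r t\<bar> powr p) \<partial>L01) = (\<integral>\<^sup>+ t. indicator {0..<1} t * ennreal (\<bar>Sop f r t\<bar> powr p) \<partial>lborel)"
    by (rule nn_int_L01)
  also have "\<dots> = (\<integral>\<^sup>+ x. indicator (Ecell r) x * ennreal (\<bar>Sop f r (x 1 - 1/2)\<bar> powr p) \<partial>mu)"
    by (rule nn_int_Ecell[symmetric]) (rule powr_meas[OF Sop_borel])
  also have "\<dots> = (\<integral>\<^sup>+ x. indicator (Ecell r) x * ennreal (\<bar>cnd r f x\<bar> powr p) \<partial>mu)"
    by (simp add: cnd_factor)
  also have "\<dots> = (\<integral>\<^sup>+ x. ennreal (\<bar>cnd r f x\<bar> powr p) \<partial>Mr r)"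
    by (rule Mr_nn_integral[symmetric]) (rule powr_meas[OF cm])
  also have "\<dots> \<le> (\<integral>\<^sup>+ x. ennreal (\<bar>f x\<bar> powr p) \<partial>Mr r)" by (rule jensen_bound[OF f p])
  also have "\<dots> = (\<integral>\<^sup>+ x. indicator (Ecell r) x * ennreal (\<bar>f x\<bar> powr p) \<partial>mu)"
    by (rule Mr_nn_integral) (rule powr_meas[OF fm])
  finally show ?thesis .
qed

lemma Jsum:
  assumes F: "F \<in> borel_measurable mu" and I: "countable I"
  shows "(\<integral>\<^sup>+ r. (\<integral>\<^sup>+ x. indicator (Ecell r) x * F x \<partial>mu) \<partial>count_space I) \<le> (\<integral>\<^sup>+ x. F x \<partial>mu)"
proof -
  have "(\<integral>\<^sup>+ r. (\<integral>\<^sup>+ x. indicator (Ecell r) x * F x \<partial>mu) \<partial>count_space I) =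
      (\<integral>\<^sup>+ x. (\<integral>\<^sup>+ r. indicator (Ecell r) x * F x \<partial>count_space I) \<partial>mu)"
    by (rule nn_integral_count_space_nn_integral[symmetric, OF I]) (use F Ecell_sets in auto)
  also have "\<dots> \<le> (\<integral>\<^sup>+ x. F x \<partial>mu)"
  proof (rule nn_integral_mono)
    fix x
    have "(\<integral>\<^sup>+ r. indicator (Ecell r) x * F x \<partial>count_space I) = (\<integral>\<^sup>+ r. of_bool (x \<in> Ecell r) \<partial>count_space I) * F x"
      by (subst nn_integral_multc[symmetric]) (auto simp: indicator_def)
    also have "(\<integral>\<^sup>+ r. of_bool (x \<in> Ecell r) \<partial>count_space I) = of_bool (\<exists>r\<in>I. x \<in> Ecell r)"
      by (rule of_bool_Bex_eq_nn_integral[symmetric]) (use Ecell_disj in blast)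
    also have "of_bool (\<exists>r\<in>I. x \<in> Ecell r) * F x \<le> F x" by (simp add: of_bool_def)
    finally show "(\<integral>\<^sup>+ r. indicator (Ecell r) x * F x \<partial>count_space I) \<le> F x" .
  qed
  finally show ?thesis .
qed

lemma Sop_ellp:
  assumes f: "f \<in> Bp p" and p: "p \<ge> 1"
  shows "Sop f \<in> ellp p" "ellp_norm p (Sop f) \<le> Lp_norm mu p f"
proof -
  have p0: "p > 0" using p by simp
  have fm: "f \<in> borel_measurable mu" and Cfin: "(\<integral>\<^sup>+ x. ennreal (\<bar>f x\<bar> powr p) \<partial>mu) < \<infinity>"
    using f by (auto simp: Bp_def memLp_def)
  define C where "C = (\<integral>\<^sup>+ x. ennreal (\<bar>f x\<bar> powr p) \<partial>mu)"
  define Jr where "Jr r = (\<integral>\<^sup>+ x. indicator (Ecell r) x * ennreal (\<bar>f x\<bar> powr p) \<partial>mu)" for r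
  have Fm: "(\<lambda>x. ennreal (\<bar>f x\<bar> powr p)) \<in> borel_measurable mu" by (rule powr_meas[OF fm])
  have JrC: "Jr r \<le> C" for r unfolding Jr_def C_def by (intro nn_integral_mono) (auto simp: indicator_def)
  have mem: "memLp L01 p (Sop f r)" for r
  proof -
    have "(\<integral>\<^sup>+ t. ennreal (\<bar>Sop f r t\<bar> powr p) \<partial>L01) \<le> C"
      using Sop_norm_bound[OF f p, of r] JrC[of r] unfolding Jr_def by simp
    then show ?thesis unfolding memLp_def using Sop_L01 Cfin C_def by (auto simp: le_less_trans)
  qed
  define \<phi> where "\<phi> r = ennreal (Lp_norm L01 p (Sop f r) powr p)" for r
  have phiJ: "\<phi> r \<le> Jr r" for r
    unfolding \<phi>_def Jr_def Lp_norm_powr[OF mem p0] by (rule Sop_norm_bound[OF f p])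
  have JsumC: "(\<integral>\<^sup>+ r. Jr r \<partial>count_space I) \<le> C" if "countable I" for I
    unfolding Jr_def C_def by (rule Jsum[OF Fm that])
  have V: "countable {r. \<phi> r \<noteq> 0}"
  proof (rule count_supp_bound[of _ C])
    fix F :: "real set" assume "finite F"
    have "(\<Sum>r\<in>F. \<phi> r) \<le> (\<Sum>r\<in>F. Jr r)" by (intro sum_mono phiJ)
    also have "\<dots> = (\<integral>\<^sup>+ r. Jr r \<partial>count_space F)" using \<open>finite F\<close> by (simp add: nn_integral_count_space_finite)
    also have "\<dots> \<le> C" using JsumC \<open>finite F\<close> by (simp add: countable_finite)
    finally show "(\<Sum>r\<in>F. \<phi> r) \<le> C" .
  qed (use Cfin C_def in simp)
  have "(\<integral>\<^sup>+ r. \<phi> r \<partial>count_space UNIV) = (\<integral>\<^sup>+ r. \<phi> r \<partial>count_space {r. \<phi> r \<noteq> 0})"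
    by (rule count_UNIV_eq) simp
  also have "\<dots> \<le> (\<integral>\<^sup>+ r. Jr r \<partial>count_space {r. \<phi> r \<noteq> 0})" by (intro nn_integral_mono phiJ)
  also have "\<dots> \<le> C" by (rule JsumC[OF V])
  finally have sumC: "(\<integral>\<^sup>+ r. \<phi> r \<partial>count_space UNIV) \<le> C" .
  show "Sop f \<in> ellp p" unfolding ellp_def using mem sumC Cfin C_def \<phi>_def by (auto simp: le_less_trans)
  have "enn2real (\<integral>\<^sup>+ r. \<phi> r \<partial>count_space UNIV) \<le> enn2real C"
    using sumC Cfin C_def by (intro enn2real_mono) auto
  moreover have "ellp_norm p (Sop f) = enn2real (\<integral>\<^sup>+ r. \<phi> r \<partial>count_space UNIV) powr (1/p)"
    unfolding ellp_norm_def \<phi>_def ..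
  moreover have "Lp_norm mu p f = enn2real C powr (1/p)"
    unfolding Lp_norm_def C_def ..
  ultimately show "ellp_norm p (Sop f) \<le> Lp_norm mu p f"
    using p0 by (simp add: powr_mono2)
qed

lemma push_L01:
  assumes Q: "{t. Q t} \<in> sets borel" and ae: "AE x in Mr r. Q (x 1 - 1/2)"
  shows "AE t in L01. Q t"
proof -
  have m: "(\<lambda>x. x 1 - 1/2) \<in> measurable (Mr r) lborel"
    by (simp add: measurable_cong_sets[OF sets_Mr refl])
  have "AE t in distr (Mr r) lborel (\<lambda>x. x 1 - 1/2). Q t"
    using ae by (subst AE_distr_iff[OF m]) (use Q in auto)
  then have "AE t in density lborel (indicator {0..<1}). Q t" unfolding distr_Mr .
  moreover have "(AE t in density lborel (indicator {0..<1}). Q t) \<longleftrightarrow> (AE t in lborel. 0 < (indicator {0..<1} t :: ennreal) \<longrightarrow> Q t)"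
    by (rule AE_density) simp
  ultimately have "AE t in lborel. 0 < (indicator {0..<1} t :: ennreal) \<longrightarrow> Q t" by simp
  then have "AE t in lborel. t \<in> {0..1} \<longrightarrow> Q t"
    using AE_lborel_singleton[of 1] by eventually_elim (auto simp: indicator_def)
  then show ?thesis unfolding L01_def by (subst AE_restrict_space_iff) auto
qed

lemma Sop_lin:
  assumes f: "f \<in> Bp p" and f': "f' \<in> Bp p" and p: "p \<ge> 1"
  shows "AE t in L01. Sop (\<lambda>y. a * f y + b * f' y) r t = a * Sop f r t + b * Sop f' r t"
proof -
  interpret S: sigma_finite_subalgebra "Mr r" Fsub by (rule sfs)
  have i: "integrable (Mr r) f" "integrable (Mr r) f'" using Bp_integrable[OF f p] Bp_integrable[OF f' p] by auto
  have "AE x in Mr r. cnd r (\<lambda>y. a * f y + b * f' y) x = cnd r (\<lambda>y. a * f y) x + cnd r (\<lambda>y. b * f' y) x"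
    unfolding cnd_def by (rule S.real_cond_exp_add) (use i in auto)
  moreover have "AE x in Mr r. cnd r (\<lambda>y. a * f y) x = a * cnd r f x"
    unfolding cnd_def by (rule S.real_cond_exp_cmult) (use i in auto)
  moreover have "AE x in Mr r. cnd r (\<lambda>y. b * f' y) x = b * cnd r f' x"
    unfolding cnd_def by (rule S.real_cond_exp_cmult) (use i in auto)
  ultimately have "AE x in Mr r. Sop (\<lambda>y. a * f y + b * f' y) r (x 1 - 1/2) = a * Sop f r (x 1 - 1/2) + b * Sop f' r (x 1 - 1/2)"
    by eventually_elim (simp add: cnd_factor)
  moreover have "{t. Sop (\<lambda>y. a * f y + b * f' y) r t = a * Sop f r t + b * Sop f' r t} \<in> sets borel"
    using Sop_borel[of "\<lambda>y. a * f y + b * f' y" r] Sop_borel[of f r] Sop_borel[of f' r] by measurable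
  ultimately show ?thesis by (intro push_L01) auto
qed

lemma cube_AE:
  assumes fm: "f \<in> borel_measurable mu" and A: "A \<in> sets mu" and p: "p > 0"
  shows "(\<integral>\<^sup>+ x \<in> A. ennreal (\<bar>f x\<bar> powr p) \<partial>mu) = 0 \<longleftrightarrow> (AE x in mu. x \<in> A \<longrightarrow> f x = 0)"
proof -
  have m: "(\<lambda>x. ennreal (\<bar>f x\<bar> powr p) * indicator A x) \<in> borel_measurable mu"
    using powr_meas[OF fm] A by measurable
  have "(\<integral>\<^sup>+ x \<in> A. ennreal (\<bar>f x\<bar> powr p) \<partial>mu) = 0 \<longleftrightarrow> (AE x in mu. ennreal (\<bar>f x\<bar> powr p) * indicator A x = 0)"
    by (rule nn_integral_0_iff_AE[OF m])
  also have "\<dots> \<longleftrightarrow> (AE x in mu. x \<in> A \<longrightarrow> f x = 0)"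
    by (intro AE_cong) (auto simp: indicator_def)
  finally show ?thesis .
qed

lemma Bp_comb:
  assumes f: "f \<in> Bp p" and f': "f' \<in> Bp p" and p: "p \<ge> 1"
  shows "(\<lambda>y. a * f y + b * f' y) \<in> Bp p"
proof -
  have p0: "p > 0" using p by simp
  have mf: "memLp mu p f" "memLp mu p f'" using f f' by (auto simp: Bp_def)
  have mc: "memLp mu p (\<lambda>y. a * f y + b * f' y)" by (rule memLp_comb[OF mf p0])
  have fm: "f \<in> borel_measurable mu" "f' \<in> borel_measurable mu" "(\<lambda>y. a * f y + b * f' y) \<in> borel_measurable mu"
    using mf mc by (auto simp: memLp_def)
  have "(\<integral>\<^sup>+ x \<in> cube c. ennreal (\<bar>a * f x + b * f' x\<bar> powr p) \<partial>mu) = 0" for c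
  proof -
    have "AE x in mu. x \<in> cube c \<longrightarrow> f x = 0" "AE x in mu. x \<in> cube c \<longrightarrow> f' x = 0"
      using f f' cube_AE[OF fm(1) cube_sets p0] cube_AE[OF fm(2) cube_sets p0] by (auto simp: Bp_def)
    then have "AE x in mu. x \<in> cube c \<longrightarrow> a * f x + b * f' x = 0" by eventually_elim auto
    then show ?thesis using cube_AE[OF fm(3) cube_sets p0] by simp
  qed
  then show ?thesis using mc unfolding Bp_def by simp
qed

lemma PT:
  assumes g: "g \<in> ellp p" and p: "p \<ge> 1"
  shows "AE t in L01. Sop (Top p g) r t = g r t"
proof -
  interpret S: sigma_finite_subalgebra "Mr r" Fsub by (rule sfs)
  have p0: "p > 0" using p by simp
  have TB: "Top p g \<in> Bp p" using Top_props[OF g p] by simp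
  have Tm: "Top p g \<in> borel_measurable (Mr r)" using TB by (auto simp: Bp_def memLp_def intro: mu_Mr_meas)
  have mem: "memLp L01 p (g r)" using g by (auto simp: ellp_def)
  have gm: "g r \<in> borel_measurable L01" using mem by (auto simp: memLp_def)
  have onE: "Top p g x = (if r \<in> suppL p g then extL (g r) (x 1 - 1/2) else 0)" if "x \<in> Ecell r" for x
    using Tf_on[OF that] Ecell_x1[OF that] unfolding Top_def by (auto simp: extL_def)
  have aeE: "AE x in Mr r. x \<in> Ecell r"
    unfolding Mr_def using Ecell_sets by (subst AE_density) (auto simp: indicator_def)
  have Qm: "{t. Sop (Top p g) r t = h t} \<in> sets borel" if "h \<in> borel_measurable borel" for h
    using Sop_borel[of "Top p g" r] that by measurable
  show ?thesis
  proof (cases "r \<in> suppL p g")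
    case True
    define G where "G x = extL (g r) (x 1 - 1/2)" for x :: "nat \<Rightarrow> real"
    have eb: "extL (g r) \<in> borel_measurable borel" by (rule extL_meas[OF gm])
    have GF: "G \<in> borel_measurable Fsub" unfolding G_def using measurable_compose[OF shift_Fsub eb] by simp
    have Gmu: "G \<in> borel_measurable mu" unfolding G_def by (rule comp_meas[OF eb])
    have GM: "G \<in> borel_measurable (Mr r)" by (rule mu_Mr_meas[OF Gmu])
    have "(\<integral>\<^sup>+ x. ennreal (\<bar>G x\<bar> powr p) \<partial>Mr r) = (\<integral>\<^sup>+ x. indicator (Ecell r) x * ennreal (\<bar>extL (g r) (x 1 - 1/2)\<bar> powr p) \<partial>mu)"
      unfolding G_def by (rule Mr_nn_integral) (rule powr_meas[OF comp_meas[OF eb]])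
    also have "\<dots> = (\<integral>\<^sup>+ t. indicator {0..<1} t * ennreal (\<bar>extL (g r) t\<bar> powr p) \<partial>lborel)"
      by (rule nn_int_Ecell) (rule powr_meas[OF eb])
    also have "\<dots> = (\<integral>\<^sup>+ t. ennreal (\<bar>extL (g r) t\<bar> powr p) \<partial>L01)" by (rule nn_int_L01[symmetric])
    also have "\<dots> = (\<integral>\<^sup>+ t. ennreal (\<bar>g r t\<bar> powr p) \<partial>L01)"
      by (rule nn_integral_cong) (simp add: extL_def)
    also have "\<dots> < \<infinity>" using mem by (simp add: memLp_def)
    finally have Gfin: "(\<integral>\<^sup>+ x. ennreal (\<bar>G x\<bar> powr p) \<partial>Mr r) < \<infinity>" .
    have Gint: "integrable (Mr r) G" using Lp_integrable[OF finite_Mr GM Gfin p] by simp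
    have "AE x in Mr r. Top p g x = G x"
      using aeE by eventually_elim (simp add: onE True G_def)
    then have "AE x in Mr r. cnd r (Top p g) x = cnd r G x"
      unfolding cnd_def by (rule S.real_cond_exp_cong[OF _ Tm GM])
    moreover have "AE x in Mr r. cnd r G x = G x"
      unfolding cnd_def by (rule S.real_cond_exp_F_meas[OF Gint GF])
    ultimately have "AE x in Mr r. Sop (Top p g) r (x 1 - 1/2) = extL (g r) (x 1 - 1/2)"
      by eventually_elim (simp add: cnd_factor G_def)
    then have "AE t in L01. Sop (Top p g) r t = extL (g r) t"
      by (intro push_L01 Qm eb)
    then show ?thesis
      using AE_space[of L01] by eventually_elim (simp add: extL_def)
  next
    case False
    have "AE x in Mr r. Top p g x = 0"
      using aeE by eventually_elim (simp add: onE False)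
    then have "AE x in Mr r. cnd r (Top p g) x = cnd r (\<lambda>_. 0) x"
      unfolding cnd_def by (rule S.real_cond_exp_cong[OF _ Tm]) simp
    moreover have "AE x in Mr r. cnd r (\<lambda>_. 0) x = 0"
      unfolding cnd_def by (rule S.real_cond_exp_F_meas) simp_all
    ultimately have "AE x in Mr r. Sop (Top p g) r (x 1 - 1/2) = 0"
      by eventually_elim (simp add: cnd_factor)
    then have "AE t in L01. Sop (Top p g) r t = 0"
      using push_L01[OF Qm[of "\<lambda>_. 0"]] by simp
    moreover have "AE t in L01. g r t = 0"
      by (rule Lp0_AE[OF mem p0]) (use False in \<open>simp add: suppL_def\<close>)
    ultimately show ?thesis by eventually_elim simp
  qed
qed

theorem theorem3p6:
  fixes p :: real
  assumes "1 \<le> p"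
  shows "\<exists>(T :: (real \<Rightarrow> real \<Rightarrow> real) \<Rightarrow> (nat \<Rightarrow> real) \<Rightarrow> real)
           (P :: ((nat \<Rightarrow> real) \<Rightarrow> real) \<Rightarrow> (nat \<Rightarrow> real) \<Rightarrow> real) (c :: real).
     (\<forall>g \<in> ellp p. T g \<in> Bp p) \<and>
     (\<forall>g \<in> ellp p. \<forall>h \<in> ellp p. \<forall>a b :: real.
        Lp_norm mu p (\<lambda>x. T (\<lambda>k t. a * g k t + b * h k t) x - (a * T g x + b * T h x)) = 0) \<and>
     (\<forall>g \<in> ellp p. Lp_norm mu p (T g) = ellp_norm p g) \<and>
     (\<forall>f \<in> Bp p. P f \<in> Bp p) \<and>
     (\<forall>f \<in> Bp p. \<forall>f' \<in> Bp p. \<forall>a b :: real.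
        Lp_norm mu p (\<lambda>x. P (\<lambda>y. a * f y + b * f' y) x - (a * P f x + b * P f' x)) = 0) \<and>
     (\<forall>f \<in> Bp p. Lp_norm mu p (P f) \<le> c * Lp_norm mu p f) \<and>
     (\<forall>f \<in> Bp p. \<exists>g \<in> ellp p. Lp_norm mu p (\<lambda>x. P f x - T g x) = 0) \<and>
     (\<forall>g \<in> ellp p. Lp_norm mu p (\<lambda>x. P (T g) x - T g x) = 0)"
proof -
  have p: "1 \<le> p" by (rule assms)
  have p0: "p > 0" using p by simp
  have memg: "\<And>g r. g \<in> ellp p \<Longrightarrow> memLp L01 p (g r)" by (auto simp: ellp_def)
  have cg: "\<And>g. g \<in> ellp p \<Longrightarrow> countable (suppL p g)" using ellp_supp_countable p0 by blast
  have H1: "\<forall>g \<in> ellp p. Top p g \<in> Bp p" using Top_props[OF _ p] by blast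
  have H2: "\<forall>g \<in> ellp p. \<forall>h \<in> ellp p. \<forall>a b :: real.
        Lp_norm mu p (\<lambda>x. Top p (\<lambda>k t. a * g k t + b * h k t) x - (a * Top p g x + b * Top p h x)) = 0"
  proof (intro ballI allI)
    fix g h a b assume g: "g \<in> ellp p" and h: "h \<in> ellp p"
    define c where "c = (\<lambda>k t. a * g k t + b * h k t)"
    have mc: "memLp L01 p (c r)" for r unfolding c_def by (rule memLp_comb[OF memg[OF g] memg[OF h] p0])
    have "suppL p c \<subseteq> suppL p g \<union> suppL p h"
    proof
      fix r assume r: "r \<in> suppL p c"
      show "r \<in> suppL p g \<union> suppL p h"
      proof (rule ccontr)
        assume "r \<notin> suppL p g \<union> suppL p h"
        then have z: "Lp_norm L01 p (g r) = 0" "Lp_norm L01 p (h r) = 0" by (auto simp: suppL_def)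
        have "AE t in L01. g r t = 0" by (rule Lp0_AE[OF memg[OF g] p0 z(1)])
        moreover have "AE t in L01. h r t = 0" by (rule Lp0_AE[OF memg[OF h] p0 z(2)])
        ultimately have "AE t in L01. c r t = 0" unfolding c_def by eventually_elim simp
        then have "Lp_norm L01 p (c r) = 0" by (rule Lp_norm_AE0[OF _ p0])
        then show False using r by (simp add: suppL_def)
      qed
    qed
    then have cc: "countable (suppL p c)" by (rule countable_subset) (use cg[OF g] cg[OF h] in simp)
    have "AE x in mu. Top p c x = a * Top p g x + b * Top p h x"
      by (rule Top_lin[OF p0 memg[OF g] memg[OF h] mc cg[OF g] cg[OF h] cc]) (simp add: c_def)
    then have "AE x in mu. Top p c x - (a * Top p g x + b * Top p h x) = 0" by eventually_elim simp
    then show "Lp_norm mu p (\<lambda>x. Top p (\<lambda>k t. a * g k t + b * h k t) x - (a * Top p g x + b * Top p h x)) = 0"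
      unfolding c_def[symmetric] by (rule Lp_norm_AE0[OF _ p0])
  qed
  have H3: "\<forall>g \<in> ellp p. Lp_norm mu p (Top p g) = ellp_norm p g" using Top_props[OF _ p] by blast
  have H4: "\<forall>f \<in> Bp p. Pop p f \<in> Bp p"
    unfolding Pop_def using Top_props(1)[OF Sop_ellp(1)[OF _ p] p] by blast
  have H5: "\<forall>f \<in> Bp p. \<forall>f' \<in> Bp p. \<forall>a b :: real.
        Lp_norm mu p (\<lambda>x. Pop p (\<lambda>y. a * f y + b * f' y) x - (a * Pop p f x + b * Pop p f' x)) = 0"
  proof (intro ballI allI)
    fix f f' a b assume f: "f \<in> Bp p" and f': "f' \<in> Bp p"
    have fc: "(\<lambda>y. a * f y + b * f' y) \<in> Bp p" by (rule Bp_comb[OF f f' p])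
    have e1: "Sop f \<in> ellp p" and e2: "Sop f' \<in> ellp p" and e3: "Sop (\<lambda>y. a * f y + b * f' y) \<in> ellp p"
      using Sop_ellp(1)[OF f p] Sop_ellp(1)[OF f' p] Sop_ellp(1)[OF fc p] by auto
    have "AE x in mu. Pop p (\<lambda>y. a * f y + b * f' y) x = a * Pop p f x + b * Pop p f' x"
      unfolding Pop_def
      by (rule Top_lin[OF p0 memg[OF e1] memg[OF e2] memg[OF e3] cg[OF e1] cg[OF e2] cg[OF e3]])
         (rule Sop_lin[OF f f' p])
    then have "AE x in mu. Pop p (\<lambda>y. a * f y + b * f' y) x - (a * Pop p f x + b * Pop p f' x) = 0"
      by eventually_elim simp
    then show "Lp_norm mu p (\<lambda>x. Pop p (\<lambda>y. a * f y + b * f' y) x - (a * Pop p f x + b * Pop p f' x)) = 0"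
      by (rule Lp_norm_AE0[OF _ p0])
  qed
  have H6: "\<forall>f \<in> Bp p. Lp_norm mu p (Pop p f) \<le> 1 * Lp_norm mu p f"
  proof
    fix f assume f: "f \<in> Bp p"
    have "Lp_norm mu p (Pop p f) = ellp_norm p (Sop f)"
      unfolding Pop_def by (rule Top_props(2)[OF Sop_ellp(1)[OF f p] p])
    also have "\<dots> \<le> Lp_norm mu p f" by (rule Sop_ellp(2)[OF f p])
    finally show "Lp_norm mu p (Pop p f) \<le> 1 * Lp_norm mu p f" by simp
  qed
  have H7: "\<forall>f \<in> Bp p. \<exists>g \<in> ellp p. Lp_norm mu p (\<lambda>x. Pop p f x - Top p g x) = 0"
  proof
    fix f assume f: "f \<in> Bp p"
    have "Lp_norm mu p (\<lambda>x. Pop p f x - Top p (Sop f) x) = 0"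
      by (rule Lp_norm_AE0[OF _ p0]) (simp add: Pop_def)
    then show "\<exists>g \<in> ellp p. Lp_norm mu p (\<lambda>x. Pop p f x - Top p g x) = 0"
      using Sop_ellp(1)[OF f p] by blast
  qed
  have H8: "\<forall>g \<in> ellp p. Lp_norm mu p (\<lambda>x. Pop p (Top p g) x - Top p g x) = 0"
  proof
    fix g assume g: "g \<in> ellp p"
    have TB: "Top p g \<in> Bp p" using Top_props(1)[OF g p] .
    have e: "Sop (Top p g) \<in> ellp p" by (rule Sop_ellp(1)[OF TB p])
    have "AE x in mu. Pop p (Top p g) x = 1 * Top p g x + 0 * Top p g x"
      unfolding Pop_def
      by (rule Top_lin[OF p0 memg[OF g] memg[OF g] memg[OF e] cg[OF g] cg[OF g] cg[OF e]])
         (use PT[OF g p] in simp)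
    then have "AE x in mu. Pop p (Top p g) x - Top p g x = 0" by eventually_elim simp
    then show "Lp_norm mu p (\<lambda>x. Pop p (Top p g) x - Top p g x) = 0"
      by (rule Lp_norm_AE0[OF _ p0])
  qed
  show ?thesis
    apply (rule exI[of _ "Top p"])
    apply (rule exI[of _ "Pop p"])
    apply (rule exI[of _ 1])
    using H1 H2 H3 H4 H5 H6 H7 H8 by (intro conjI)
qed

end
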